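(* Let $\Lambda(s,t)\in SO(3)$ and $\boldsymbol{r}(s,t)\in\mathbb{R}^3$ for $s\in[0,L]$ and time $t$, and let $l(\boldsymbol{\omega},\boldsymbol{\gamma},\boldsymbol{\Omega},\boldsymbol{\Gamma},\boldsymbol{\rho})$ be a Lagrangian depending on $\mathbb{R}^3$-valued functions of $s$ (where $\omega=\widehat{\boldsymbol{\omega}}$, $\Omega=\widehat{\boldsymbol{\Omega}}\in\mathfrak{so}(3)$). Consider the action $$S=\int l(\boldsymbol{\omega},\boldsymbol{\gamma},\boldsymbol{\Omega},\boldsymbol{\Gamma},\boldsymbol{\rho})\,dt+\iint\Big(\boldsymbol{\pi}\cdot(\Lambda^{-1}\dot\Lambda-\omega)+\boldsymbol{\Pi}\cdot(\Lambda^{-1}\Lambda'-\Omega)+\mathbf{R}\cdot(\Lambda^{-1}\boldsymbol{r}-\boldsymbol{\rho})+\boldsymbol{\mu}\cdot(\Lambda^{-1}\dot{\boldsymbol{r}}-\boldsymbol{\gamma})+\mathbf{M}\cdot(\Lambda^{-1}\boldsymbol{r}'-\boldsymbol{\Gamma})\Big)\,ds\,dt,$$ with $\mathbb{R}^3$-valued Lagrange multipliers $\boldsymbol{\pi},\boldsymbol{\Pi},\mathbf{R},\boldsymbol{\mu},\mathbf{M}$, where elements of $\mathfrak{so}(3)$ are identified with vectors in $\mathbb{R}^3$ via the hat map in the dot products. Then the equations arising from the variational principle $\delta S=0$ (with respect to variations of $\Lambda,\boldsymbol{r}$, of $\boldsymbol{\omega},\boldsymbol{\gamma},\boldsymbol{\Omega},\boldsymbol{\Gamma},\boldsymbol{\rho}$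 and of the multipliers) are $$\frac{\delta l}{\delta\boldsymbol{\rho}}-\mathbf{R}=0,\quad \frac{\delta l}{\delta\boldsymbol{\omega}}-\boldsymbol{\pi}=0,\quad \frac{\delta l}{\delta\boldsymbol{\Omega}}-\boldsymbol{\Pi}=0,\quad \frac{\delta l}{\delta\boldsymbol{\gamma}}-\boldsymbol{\mu}=0,\quad \frac{\delta l}{\delta\boldsymbol{\Gamma}}-\mathbf{M}=0,$$ $$\dot{\boldsymbol{\pi}}+\boldsymbol{\omega}\times\boldsymbol{\pi}+\boldsymbol{\Pi}'+\boldsymbol{\Omega}\times\boldsymbol{\Pi}+\boldsymbol{\gamma}\times\boldsymbol{\mu}+\boldsymbol{\Gamma}\times\mathbf{M}+\boldsymbol{\rho}\times\mathbf{R}=0,$$ $$\dot{\boldsymbol{\mu}}+\boldsymbol{\omega}\times\boldsymbol{\mu}+\mathbf{M}'+\boldsymbol{\Omega}\times\mathbf{M}-\mathbf{R}=0,$$ together with the constraints $\Lambda^{-1}\dot\Lambda=\omega$, $\Lambda^{-1}\Lambda'=\Omega$, $\Lambda^{-1}\boldsymbol{r}=\boldsymbol{\rho}$, $\Lambda^{-1}\dot{\boldsymbol{r}}=\boldsymbol{\gamma}$, $\Lambda^{-1}\boldsymbol{r}'=\boldsymbol{\Gamma}$.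
   Context: Prime denotes $\partial_s$ and dot denotes $\partial_t$. The hat map $\widehat{\cdot}:\mathbb{R}^3\to\mathfrak{so}(3)$ is the Lie algebra isomorphism defined by $\widehat{\boldsymbol{u}}\boldsymbol{v}=\boldsymbol{u}\times\boldsymbol{v}$. $\delta l/\delta(\cdot)$ denote functional derivatives with respect to the $L^2$ pairing in $s$, regarded as $\mathbb{R}^3$-valued. *)

theory Defs
  imports "HOL-Analysis.Analysis"
begin

type_synonym vec3 = "real^3"
type_synonym mat3 = "real^3^3"
text \<open>A field on the (s,t)-plane: first argument is the arclength s, second the time t.\<close>
type_synonym 'a field = "real \<Rightarrow> real \<Rightarrow> 'a"

text \<open>Hat map R^3 -> so(3):  hat u *v v = u \<times> v.\<close>
definition hat :: "vec3 \<Rightarrow> mat3" where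
  "hat u = vector [vector [0, - u$3, u$2], vector [u$3, 0, - u$1], vector [- u$2, u$1, 0]]"

definition vee :: "mat3 \<Rightarrow> vec3" where
  "vee A = vector [A$3$2, A$1$3, A$2$1]"

text \<open>Exponential map so(3) -> SO(3) (Rodrigues formula), used to generate variations of Lambda.\<close>
definition so3_exp :: "vec3 \<Rightarrow> mat3" where
  "so3_exp v = mat 1 + (sin (norm v) / norm v) *\<^sub>R hat v
                     + ((1 - cos (norm v)) / (norm v)^2) *\<^sub>R (hat v ** hat v)"

text \<open>Partial derivatives: dot = d/dt, prime = d/ds.\<close>
definition pt :: "'a::real_normed_vector field \<Rightarrow> 'a field" where
  "pt F = (\<lambda>s t. vector_derivative (\<lambda>\<tau>. F s \<tau>) (at t))"

definition ps :: "'a::real_normed_vector field \<Rightarrow> 'a field" where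
  "ps F = (\<lambda>s t. vector_derivative (\<lambda>\<sigma>. F \<sigma> t) (at s))"

definition cont_field :: "'a::real_normed_vector field \<Rightarrow> bool" where
  "cont_field F \<longleftrightarrow> continuous_on UNIV (\<lambda>(s,t). F s t)"

definition C1_field :: "'a::real_normed_vector field \<Rightarrow> bool" where
  "C1_field F \<longleftrightarrow> cont_field F
     \<and> (\<forall>s t. (\<lambda>\<tau>. F s \<tau>) differentiable (at t) \<and> (\<lambda>\<sigma>. F \<sigma> t) differentiable (at s))
     \<and> cont_field (pt F) \<and> cont_field (ps F)"

definition test_field :: "real \<Rightarrow> real \<Rightarrow> real \<Rightarrow> 'a::real_normed_vector field \<Rightarrow> bool" where
  "test_field L T0 T1 F \<longleftrightarrow> C1_field F \<and>
     (\<exists>K. compact K \<and> K \<subseteq> box (0, T0) (L, T1) \<and> (\<forall>s t. (s, t) \<notin> K \<longrightarrow> F s t = 0))"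

type_synonym sfun = "real \<Rightarrow> vec3"
type_synonym lagr = "sfun \<Rightarrow> sfun \<Rightarrow> sfun \<Rightarrow> sfun \<Rightarrow> sfun \<Rightarrow> real"
type_synonym lagr_deriv = "sfun \<Rightarrow> sfun \<Rightarrow> sfun \<Rightarrow> sfun \<Rightarrow> sfun \<Rightarrow> sfun"

text \<open>dw,dg,dW,dG,dr are the functional derivatives of l (w.r.t. the L^2 pairing on [0,L])
  in its five arguments omega, gamma, Omega, Gamma, rho.\<close>
definition functional_derivs :: "real \<Rightarrow> lagr \<Rightarrow> lagr_deriv \<Rightarrow> lagr_deriv \<Rightarrow> lagr_deriv
    \<Rightarrow> lagr_deriv \<Rightarrow> lagr_deriv \<Rightarrow> bool" where
  "functional_derivs L l dw dg dW dG dr \<longleftrightarrow>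
    (\<forall>w g W G r \<eta>. continuous_on {0..L} \<eta> \<longrightarrow>
      ((\<lambda>\<epsilon>. l (\<lambda>s. w s + \<epsilon> *\<^sub>R \<eta> s) g W G r) has_real_derivative
          integral {0..L} (\<lambda>s. dw w g W G r s \<bullet> \<eta> s)) (at 0) \<and>
      ((\<lambda>\<epsilon>. l w (\<lambda>s. g s + \<epsilon> *\<^sub>R \<eta> s) W G r) has_real_derivative
          integral {0..L} (\<lambda>s. dg w g W G r s \<bullet> \<eta> s)) (at 0) \<and>
      ((\<lambda>\<epsilon>. l w g (\<lambda>s. W s + \<epsilon> *\<^sub>R \<eta> s) G r) has_real_derivative
          integral {0..L} (\<lambda>s. dW w g W G r s \<bullet> \<eta> s)) (at 0) \<and>
      ((\<lambda>\<epsilon>. l w g W (\<lambda>s. G s + \<epsilon> *\<^sub>R \<eta> s) r) has_real_derivative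
          integral {0..L} (\<lambda>s. dG w g W G r s \<bullet> \<eta> s)) (at 0) \<and>
      ((\<lambda>\<epsilon>. l w g W G (\<lambda>s. r s + \<epsilon> *\<^sub>R \<eta> s)) has_real_derivative
          integral {0..L} (\<lambda>s. dr w g W G r s \<bullet> \<eta> s)) (at 0))"

definition lag_int :: "real \<Rightarrow> real \<Rightarrow> lagr \<Rightarrow> vec3 field \<Rightarrow> vec3 field \<Rightarrow> vec3 field
    \<Rightarrow> vec3 field \<Rightarrow> vec3 field \<Rightarrow> real" where
  "lag_int T0 T1 l w g W G r =
     integral {T0..T1} (\<lambda>t. l (\<lambda>s. w s t) (\<lambda>s. g s t) (\<lambda>s. W s t) (\<lambda>s. G s t) (\<lambda>s. r s t))"

definition dint :: "real \<Rightarrow> real \<Rightarrow> real \<Rightarrow> real field \<Rightarrow> real" where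
  "dint L T0 T1 f = integral {T0..T1} (\<lambda>t. integral {0..L} (\<lambda>s. f s t))"

text \<open>Regularity hypothesis: at the given fields, differentiation under the time integral of
  the Lagrangian is permitted along admissible variations of each argument.\<close>
definition diff_under_int :: "real \<Rightarrow> real \<Rightarrow> real \<Rightarrow> lagr \<Rightarrow> lagr_deriv \<Rightarrow> lagr_deriv
    \<Rightarrow> lagr_deriv \<Rightarrow> lagr_deriv \<Rightarrow> lagr_deriv
    \<Rightarrow> vec3 field \<Rightarrow> vec3 field \<Rightarrow> vec3 field \<Rightarrow> vec3 field \<Rightarrow> vec3 field \<Rightarrow> bool" where
  "diff_under_int L T0 T1 l dw dg dW dG dr w g W G r \<longleftrightarrow>
    (\<forall>\<eta>. test_field L T0 T1 \<eta> \<longrightarrow>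
      (let D = (\<lambda>d. dint L T0 T1 (\<lambda>s t. d (\<lambda>s. w s t) (\<lambda>s. g s t) (\<lambda>s. W s t) (\<lambda>s. G s t) (\<lambda>s. r s t) s \<bullet> \<eta> s t)) in
      ((\<lambda>\<epsilon>. lag_int T0 T1 l (\<lambda>s t. w s t + \<epsilon> *\<^sub>R \<eta> s t) g W G r) has_real_derivative D dw) (at 0) \<and>
      ((\<lambda>\<epsilon>. lag_int T0 T1 l w (\<lambda>s t. g s t + \<epsilon> *\<^sub>R \<eta> s t) W G r) has_real_derivative D dg) (at 0) \<and>
      ((\<lambda>\<epsilon>. lag_int T0 T1 l w g (\<lambda>s t. W s t + \<epsilon> *\<^sub>R \<eta> s t) G r) has_real_derivative D dW) (at 0) \<and>
      ((\<lambda>\<epsilon>. lag_int T0 T1 l w g W (\<lambda>s t. G s t + \<epsilon> *\<^sub>R \<eta> s t) r) has_real_derivative D dG) (at 0) \<and>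
      ((\<lambda>\<epsilon>. lag_int T0 T1 l w g W G (\<lambda>s t. r s t + \<epsilon> *\<^sub>R \<eta> s t)) has_real_derivative D dr) (at 0)))"

text \<open>The action S. Arguments: Lambda, r, omega, gamma, Omega, Gamma, rho, pi, Pi, R, mu, M.\<close>
definition action :: "real \<Rightarrow> real \<Rightarrow> real \<Rightarrow> lagr \<Rightarrow> mat3 field \<Rightarrow> vec3 field
    \<Rightarrow> vec3 field \<Rightarrow> vec3 field \<Rightarrow> vec3 field \<Rightarrow> vec3 field \<Rightarrow> vec3 field
    \<Rightarrow> vec3 field \<Rightarrow> vec3 field \<Rightarrow> vec3 field \<Rightarrow> vec3 field \<Rightarrow> vec3 field \<Rightarrow> real" where
  "action L T0 T1 l \<Lambda> x w g W G \<rho> \<pi> Pm R \<mu> M =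
     lag_int T0 T1 l w g W G \<rho> +
     dint L T0 T1 (\<lambda>s t.
         \<pi> s t \<bullet> (vee (matrix_inv (\<Lambda> s t) ** pt \<Lambda> s t) - w s t)
       + Pm s t \<bullet> (vee (matrix_inv (\<Lambda> s t) ** ps \<Lambda> s t) - W s t)
       + R s t \<bullet> (matrix_inv (\<Lambda> s t) *v x s t - \<rho> s t)
       + \<mu> s t \<bullet> (matrix_inv (\<Lambda> s t) *v pt x s t - g s t)
       + M s t \<bullet> (matrix_inv (\<Lambda> s t) *v ps x s t - G s t))"

text \<open>The variational principle \<delta>S = 0: the first variation of S vanishes along every admissible
  variation of each of the fields (Lambda varied as Lambda exp(\<epsilon> hat Sigma), all others linearly).\<close>
definition stationary :: "real \<Rightarrow> real \<Rightarrow> real \<Rightarrow> lagr \<Rightarrow> mat3 field \<Rightarrow> vec3 field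
    \<Rightarrow> vec3 field \<Rightarrow> vec3 field \<Rightarrow> vec3 field \<Rightarrow> vec3 field \<Rightarrow> vec3 field
    \<Rightarrow> vec3 field \<Rightarrow> vec3 field \<Rightarrow> vec3 field \<Rightarrow> vec3 field \<Rightarrow> vec3 field \<Rightarrow> bool" where
  "stationary L T0 T1 l \<Lambda> x w g W G \<rho> \<pi> Pm R \<mu> M \<longleftrightarrow>
    (\<forall>\<eta> :: vec3 field. test_field L T0 T1 \<eta> \<longrightarrow>
      (let V = (\<lambda>f. \<lambda>\<epsilon>::real. \<lambda>s t. f s t + \<epsilon> *\<^sub>R \<eta> s t);
           S = action L T0 T1 l in
       ((\<lambda>\<epsilon>. S (\<lambda>s t. \<Lambda> s t ** so3_exp (\<epsilon> *\<^sub>R \<eta> s t)) x w g W G \<rho> \<pi> Pm R \<mu> M) has_real_derivative 0) (at 0) \<and>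
       ((\<lambda>\<epsilon>. S \<Lambda> (V x \<epsilon>) w g W G \<rho> \<pi> Pm R \<mu> M) has_real_derivative 0) (at 0) \<and>
       ((\<lambda>\<epsilon>. S \<Lambda> x (V w \<epsilon>) g W G \<rho> \<pi> Pm R \<mu> M) has_real_derivative 0) (at 0) \<and>
       ((\<lambda>\<epsilon>. S \<Lambda> x w (V g \<epsilon>) W G \<rho> \<pi> Pm R \<mu> M) has_real_derivative 0) (at 0) \<and>
       ((\<lambda>\<epsilon>. S \<Lambda> x w g (V W \<epsilon>) G \<rho> \<pi> Pm R \<mu> M) has_real_derivative 0) (at 0) \<and>
       ((\<lambda>\<epsilon>. S \<Lambda> x w g W (V G \<epsilon>) \<rho> \<pi> Pm R \<mu> M) has_real_derivative 0) (at 0) \<and>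
       ((\<lambda>\<epsilon>. S \<Lambda> x w g W G (V \<rho> \<epsilon>) \<pi> Pm R \<mu> M) has_real_derivative 0) (at 0) \<and>
       ((\<lambda>\<epsilon>. S \<Lambda> x w g W G \<rho> (V \<pi> \<epsilon>) Pm R \<mu> M) has_real_derivative 0) (at 0) \<and>
       ((\<lambda>\<epsilon>. S \<Lambda> x w g W G \<rho> \<pi> (V Pm \<epsilon>) R \<mu> M) has_real_derivative 0) (at 0) \<and>
       ((\<lambda>\<epsilon>. S \<Lambda> x w g W G \<rho> \<pi> Pm (V R \<epsilon>) \<mu> M) has_real_derivative 0) (at 0) \<and>
       ((\<lambda>\<epsilon>. S \<Lambda> x w g W G \<rho> \<pi> Pm R (V \<mu> \<epsilon>) M) has_real_derivative 0) (at 0) \<and>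
       ((\<lambda>\<epsilon>. S \<Lambda> x w g W G \<rho> \<pi> Pm R \<mu> (V M \<epsilon>)) has_real_derivative 0) (at 0)))"

end

theory Submission
  imports Defs
begin


lemma hat_comp: "hat u $ i $ j = (if i = 1 then (if j = 1 then 0 else if j = 2 then - u$3 else u$2)
   else if i = 2 then (if j = 1 then u$3 else if j = 2 then 0 else - u$1)
   else (if j = 1 then - u$2 else if j = 2 then u$1 else 0))"
  using exhaust_3[of i] exhaust_3[of j] by (auto simp add: hat_def)

lemma hat_apply: "hat u *v v = cross3 u v"
  by (simp add: hat_comp cross3_def vec_eq_iff forall_3 matrix_vector_mult_def sum_3 algebra_simps)

lemma linear_hat: "linear hat"
  by (rule linearI) (simp_all add: vec_eq_iff forall_3 hat_comp)

lemma bounded_linear_hat: "bounded_linear hat"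
  using linear_hat linear_conv_bounded_linear by blast

lemma linear_vee: "linear vee"
  by (rule linearI) (simp_all add: vec_eq_iff forall_3 vee_def)

lemma bounded_linear_vee: "bounded_linear vee"
  using linear_vee linear_conv_bounded_linear by blast

lemma vee_hat[simp]: "vee (hat u) = u"
  by (simp add: vec_eq_iff forall_3 vee_def hat_comp)

lemma matrix_add_rdistrib': "(A + B) ** C = A ** C + B ** (C::real^'p^'n)"
  by (simp add: vec_eq_iff matrix_matrix_mult_def sum.distrib algebra_simps)

lemma bilinear_mm: "bilinear ((**) :: real^'n^'m \<Rightarrow> real^'p^'n \<Rightarrow> real^'p^'m)"
  by (simp add: bilinear_def linear_iff matrix_add_ldistrib matrix_add_rdistrib'
     matrix_scalar_ac scalar_matrix_assoc)

lemma bounded_bilinear_mm: "bounded_bilinear ((**) :: real^'n^'m \<Rightarrow> real^'p^'n \<Rightarrow> real^'p^'m)"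
  using bilinear_mm bilinear_conv_bounded_bilinear by blast

lemma bilinear_mv: "bilinear ((*v) :: real^'n^'m \<Rightarrow> real^'n \<Rightarrow> real^'m)"
  by (simp add: bilinear_def linear_iff matrix_vector_mult_add_rdistrib matrix_vector_right_distrib
     matrix_scaleR_vector_ac scaleR_matrix_vector_assoc)

lemma bounded_bilinear_mv: "bounded_bilinear ((*v) :: real^'n^'m \<Rightarrow> real^'n \<Rightarrow> real^'m)"
  using bilinear_mv bilinear_conv_bounded_bilinear by blast

lemma bounded_bilinear_cross: "bounded_bilinear cross3"
  using bilinear_cross bilinear_conv_bounded_bilinear by blast

lemma linear_transpose: "linear (transpose :: real^'n^'m \<Rightarrow> real^'m^'n)"
  by (rule linearI) (simp_all add: vec_eq_iff transpose_def)

lemma bounded_linear_transpose: "bounded_linear (transpose :: real^'n^'m \<Rightarrow> real^'m^'n)"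
  using linear_transpose linear_conv_bounded_linear by blast


definition allsum :: "(nat \<Rightarrow> real) \<Rightarrow> bool" where
  "allsum c \<longleftrightarrow> (\<forall>x. summable (\<lambda>n. c n * x ^ n))"

definition PS :: "(nat \<Rightarrow> real) \<Rightarrow> real \<Rightarrow> real" where
  "PS c x = (\<Sum>n. c n * x ^ n)"

lemma allsum_diffs: "allsum c \<Longrightarrow> allsum (diffs c)"
  unfolding allsum_def by (blast intro: termdiff_converges_all)

lemma PS_deriv: "allsum c \<Longrightarrow> (PS c has_real_derivative PS (diffs c) x) (at x)"
  unfolding allsum_def PS_def by (rule termdiffs_strong_converges_everywhere) blast

lemma PS_isCont: "allsum c \<Longrightarrow> isCont (PS c) x"
  using PS_deriv DERIV_isCont by blast

lemma PS_cont[continuous_intros]: "allsum c \<Longrightarrow> continuous_on A f \<Longrightarrow> continuous_on A (\<lambda>x. PS c (f x))"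
proof -
  assume c: "allsum c" and f: "continuous_on A f"
  have "continuous_on UNIV (PS c)" using c by (simp add: continuous_at_imp_continuous_on PS_isCont)
  from continuous_on_compose2[OF this f] show ?thesis by auto
qed

lemma PS_0[simp]: "PS c 0 = c 0"
  by (simp add: PS_def powser_zero)

lemma allsum_fact:
  assumes "\<And>n. \<bar>c n\<bar> \<le> 1 / fact n" shows "allsum c"
  unfolding allsum_def
proof
  fix x :: real
  have "summable (\<lambda>n. \<bar>x\<bar> ^ n / fact n)"
    using summable_exp[of "\<bar>x\<bar>"] by (simp add: divide_inverse mult.commute)
  then show "summable (\<lambda>n. c n * x ^ n)"
  proof (rule summable_comparison_test'[where N=0])
    fix n :: nat
    have "norm (c n * x ^ n) = \<bar>c n\<bar> * \<bar>x\<bar> ^ n" by (simp add: abs_mult power_abs)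
    also have "\<dots> \<le> 1 / fact n * \<bar>x\<bar> ^ n" by (rule mult_right_mono[OF assms]) simp
    finally show "norm (c n * x ^ n) \<le> \<bar>x\<bar> ^ n / fact n" by simp
  qed
qed

definition cS :: "nat \<Rightarrow> real" where "cS n = (-1)^n / fact (2*n+1)"
definition cC :: "nat \<Rightarrow> real" where "cC n = (-1)^n / fact (2*n+2)"

lemma allsum_cS: "allsum cS"
proof (rule allsum_fact)
  fix n
  have "fact n \<le> (fact (2*n+1) :: real)" by (rule fact_mono) simp
  then show "\<bar>cS n\<bar> \<le> 1 / fact n" by (simp add: cS_def abs_div frac_le)
qed

lemma allsum_cC: "allsum cC"
proof (rule allsum_fact)
  fix n
  have "fact n \<le> (fact (2*n+2) :: real)" by (rule fact_mono) simp
  then show "\<bar>cC n\<bar> \<le> 1 / fact n" by (simp add: cC_def abs_div frac_le)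
qed

lemma allsum_all[simp]: "allsum cS" "allsum cC" "allsum (diffs cS)" "allsum (diffs cC)"
  "allsum (diffs (diffs cS))" "allsum (diffs (diffs cC))"
  by (simp_all add: allsum_cS allsum_cC allsum_diffs)

lemma PS_sin: "PS cS (r^2) * r = sin r"
proof -
  have "summable (\<lambda>n. cS n * (r^2) ^ n)" using allsum_cS by (simp add: allsum_def)
  then have "(\<lambda>n. cS n * (r^2) ^ n * r) sums (PS cS (r^2) * r)"
    unfolding PS_def by (intro sums_mult2 summable_sums)
  moreover have "(\<lambda>n. cS n * (r^2) ^ n * r) = (\<lambda>n. (- 1) ^ n / fact (2 * n + 1) * r ^ (2 * n + 1))"
    proof (rule ext)
    fix n
    have pw: "(r^2)^n = r^(2*n)" by (simp add: power_mult)
    show "cS n * (r^2) ^ n * r = (- 1) ^ n / fact (2 * n + 1) * r ^ (2 * n + 1)"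
      by (simp add: cS_def pw)
  qed
  ultimately show ?thesis using sin_paired[of r] sums_unique2 by metis
qed

lemma PS_cos: "PS cC (r^2) * r^2 = 1 - cos r"
proof -
  have "summable (\<lambda>n. cC n * (r^2) ^ n)" using allsum_cC by (simp add: allsum_def)
  then have "(\<lambda>n. cC n * (r^2) ^ n * r^2) sums (PS cC (r^2) * r^2)"
    unfolding PS_def by (intro sums_mult2 summable_sums)
  moreover
  let ?f = "\<lambda>n. (- 1) ^ n / fact (2 * n) * r ^ (2 * n)"
  have "(\<lambda>n. ?f (Suc n)) sums (cos r + - 1)"
    using cos_paired[of r] sums_Suc_iff[of ?f] by simp
  then have "(\<lambda>n. - ?f (Suc n)) sums (1 - cos r)"
    using sums_minus by fastforce
  moreover have "(\<lambda>n. - ?f (Suc n)) = (\<lambda>n. cC n * (r^2) ^ n * r^2)"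
    proof (rule ext)
    fix n
    have pw: "(r^2)^n * r^2 = r^(2*Suc n)" by (metis power_mult power_Suc2)
    have e: "cC n * (r^2) ^ n * r^2 = cC n * r^(2*Suc n)" by (simp only: mult.assoc pw)
    have e2: "2 * Suc n = 2 * n + 2" by simp
    show "- ?f (Suc n) = cC n * (r^2) ^ n * r^2"
      unfolding e unfolding cC_def e2 by simp
  qed
  ultimately show ?thesis using sums_unique2 by metis
qed

definition Ex :: "vec3 \<Rightarrow> mat3" where
  "Ex v = mat 1 + PS cS (v \<bullet> v) *\<^sub>R hat v + PS cC (v \<bullet> v) *\<^sub>R (hat v ** hat v)"

lemma hat_zero[simp]: "hat 0 = 0"
  by (simp add: vec_eq_iff forall_3 hat_comp)

lemma so3_exp_Ex: "so3_exp v = Ex v"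
proof (cases "v = 0")
  case True then show ?thesis by (simp add: so3_exp_def Ex_def)
next
  case False
  let ?r = "norm v"
  have r: "?r \<noteq> 0" using False by simp
  have x: "v \<bullet> v = ?r^2" by (simp add: power2_norm_eq_inner)
  have "sin ?r / ?r = PS cS (v \<bullet> v)" using PS_sin[of ?r] r x by (simp add: field_simps)
  moreover have "(1 - cos ?r) / ?r^2 = PS cC (v \<bullet> v)" using PS_cos[of ?r] r x by (simp add: field_simps)
  ultimately show ?thesis by (simp add: so3_exp_def Ex_def)
qed

lemma SC_rel: "2 * PS cC (v \<bullet> v) - (PS cS (v \<bullet> v))^2 - (PS cC (v \<bullet> v))^2 * (v \<bullet> v) = 0"
proof (cases "v = 0")
  case True
  then show ?thesis by (simp add: cC_def cS_def)
next
  case False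
  let ?r = "norm v"
  have r: "?r \<noteq> 0" using False by simp
  have x: "v \<bullet> v = ?r^2" by (simp add: power2_norm_eq_inner)
  have s: "PS cS (v \<bullet> v) = sin ?r / ?r" using PS_sin[of ?r] r x by (simp add: field_simps)
  have c: "PS cC (v \<bullet> v) = (1 - cos ?r) / ?r^2" using PS_cos[of ?r] r x by (simp add: field_simps)
  have "2 * ((1 - cos ?r) / ?r^2) - (sin ?r / ?r)^2 - ((1 - cos ?r) / ?r^2)^2 * ?r^2 = 0"
  proof -
    have s2: "(sin ?r)^2 = 1 - (cos ?r)^2" by (simp add: sin_squared_eq)
    show ?thesis using r by (simp add: field_simps s2) (simp add: power2_eq_square algebra_simps)
  qed
  then show ?thesis unfolding s c unfolding x .
qed


abbreviation "S \<equiv> PS cS"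
abbreviation "S1 \<equiv> PS (diffs cS)"
abbreviation "S2 \<equiv> PS (diffs (diffs cS))"
abbreviation "Cc \<equiv> PS cC"
abbreviation "C1 \<equiv> PS (diffs cC)"
abbreviation "C2 \<equiv> PS (diffs (diffs cC))"

lemma PS_has_derivative[derivative_intros]:
  assumes "allsum c" "(g has_derivative g') (at x within s)"
  shows "((\<lambda>x. PS c (g x)) has_derivative (\<lambda>h. g' h * PS (diffs c) (g x))) (at x within s)"
  using DERIV_compose_FDERIV[OF PS_deriv[OF assms(1)] assms(2)] .

lemma hat_has_derivative[derivative_intros]:
  "(g has_derivative g') F \<Longrightarrow> ((\<lambda>x. hat (g x)) has_derivative (\<lambda>h. hat (g' h))) F"
  using bounded_linear.has_derivative[OF bounded_linear_hat] .

lemma mm_has_derivative[derivative_intros]: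
  "(f has_derivative f') (at x within s) \<Longrightarrow> (g has_derivative g') (at x within s) \<Longrightarrow>
   ((\<lambda>x. (f x :: real^'n^'m) ** (g x :: real^'p^'n)) has_derivative (\<lambda>h. f x ** g' h + f' h ** g x)) (at x within s)"
  using bounded_bilinear.FDERIV[OF bounded_bilinear_mm] .

lemma hat_scaleR[simp]: "hat (c *\<^sub>R u) = c *\<^sub>R hat u"
  using linear_cmul[OF linear_hat] .
lemma hat_add[simp]: "hat (u + v) = hat u + hat v"
  using linear_add[OF linear_hat] .
lemma hat_minus[simp]: "hat (- u) = - hat u"
  using linear_neg[OF linear_hat] .
lemma hat_diff[simp]: "hat (u - v) = hat u - hat v"
  using linear_diff[OF linear_hat] .

definition dEx :: "vec3 \<Rightarrow> vec3 \<Rightarrow> mat3" where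
  "dEx v k = (2 * S1 (v \<bullet> v) * (v \<bullet> k)) *\<^sub>R hat v + S (v \<bullet> v) *\<^sub>R hat k
     + (2 * C1 (v \<bullet> v) * (v \<bullet> k)) *\<^sub>R (hat v ** hat v) + Cc (v \<bullet> v) *\<^sub>R (hat k ** hat v + hat v ** hat k)"

lemma Ex_has_derivative: "(Ex has_derivative dEx v) (at v)"
  unfolding Ex_def[abs_def]
  apply (rule derivative_eq_intros refl | simp)+
  apply (rule ext)
  apply (simp add: dEx_def algebra_simps inner_commute matrix_scalar_ac scalar_matrix_assoc matrix_add_ldistrib)
  done

lemma dEx_scaleR: "dEx v (c *\<^sub>R k) = c *\<^sub>R dEx v k"
  by (simp add: dEx_def algebra_simps matrix_scalar_ac scalar_matrix_assoc)

lemma Ex_curve: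
  assumes "(u has_vector_derivative u') (at t)"
  shows "((\<lambda>\<tau>. Ex (u \<tau>)) has_vector_derivative dEx (u t) u') (at t)"
proof -
  have "((Ex \<circ> u) has_derivative (dEx (u t) \<circ> (\<lambda>h. h *\<^sub>R u'))) (at t)"
    using assms unfolding has_vector_derivative_def by (rule diff_chain_at[OF _ Ex_has_derivative])
  then show ?thesis unfolding has_vector_derivative_def by (simp add: o_def dEx_scaleR)
qed

lemma Ex_scale: "Ex (e *\<^sub>R a) = mat 1 + (e * S (e^2 * (a \<bullet> a))) *\<^sub>R hat a
   + (e^2 * Cc (e^2 * (a \<bullet> a))) *\<^sub>R (hat a ** hat a)"
  by (simp add: Ex_def power2_eq_square matrix_scalar_ac scalar_matrix_assoc algebra_simps)

definition dE :: "real \<Rightarrow> vec3 \<Rightarrow> mat3" where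
  "dE e a = (S (e^2 * (a \<bullet> a)) + 2 * e^2 * (a \<bullet> a) * S1 (e^2 * (a \<bullet> a))) *\<^sub>R hat a
     + (2 * e * Cc (e^2 * (a \<bullet> a)) + 2 * e^3 * (a \<bullet> a) * C1 (e^2 * (a \<bullet> a))) *\<^sub>R (hat a ** hat a)"

definition Dt :: "real \<Rightarrow> vec3 \<Rightarrow> vec3 \<Rightarrow> mat3" where
  "Dt e a b = (2 * e^3 * S1 (e^2 * (a \<bullet> a)) * (a \<bullet> b)) *\<^sub>R hat a + (e * S (e^2 * (a \<bullet> a))) *\<^sub>R hat b
     + (2 * e^4 * C1 (e^2 * (a \<bullet> a)) * (a \<bullet> b)) *\<^sub>R (hat a ** hat a)
     + (e^2 * Cc (e^2 * (a \<bullet> a))) *\<^sub>R (hat b ** hat a + hat a ** hat b)"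

definition dDt :: "real \<Rightarrow> vec3 \<Rightarrow> vec3 \<Rightarrow> mat3" where
  "dDt e a b = (2 * (a \<bullet> b) * (2 * e^4 * (a \<bullet> a) * S2 (e^2 * (a \<bullet> a)) + 3 * e^2 * S1 (e^2 * (a \<bullet> a)))) *\<^sub>R hat a
     + (S (e^2 * (a \<bullet> a)) + 2 * e^2 * (a \<bullet> a) * S1 (e^2 * (a \<bullet> a))) *\<^sub>R hat b
     + (2 * (a \<bullet> b) * (2 * e^5 * (a \<bullet> a) * C2 (e^2 * (a \<bullet> a)) + 4 * e^3 * C1 (e^2 * (a \<bullet> a)))) *\<^sub>R (hat a ** hat a)
     + (2 * e * Cc (e^2 * (a \<bullet> a)) + 2 * e^3 * (a \<bullet> a) * C1 (e^2 * (a \<bullet> a))) *\<^sub>R (hat b ** hat a + hat a ** hat b)"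

lemma dEx_scale: "dEx (e *\<^sub>R a) (e *\<^sub>R b) = Dt e a b"
  by (simp add: dEx_def Dt_def power2_eq_square matrix_scalar_ac scalar_matrix_assoc algebra_simps
       power3_eq_cube power4_eq_xxxx)

lemma Ex_scale_deriv: "((\<lambda>e. Ex (e *\<^sub>R a)) has_vector_derivative dE e a) (at e)"
  unfolding Ex_scale has_vector_derivative_def
  apply (rule derivative_eq_intros refl | simp)+
  apply (rule ext)
  apply (simp add: dE_def algebra_simps power2_eq_square power3_eq_cube)
  done

lemma power5_eq: "(x::real)^5 = x * (x * (x * (x * x)))"
  by (simp add: eval_nat_numeral)

lemma Dt_deriv: "((\<lambda>e. Dt e a b) has_vector_derivative dDt e a b) (at e)"
  unfolding Dt_def[abs_def] has_vector_derivative_def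
  apply (rule derivative_eq_intros refl | simp)+
  apply (rule ext)
  apply (simp add: dDt_def algebra_simps power2_eq_square power3_eq_cube power4_eq_xxxx power5_eq)
  done

lemma at0[simp]: "Ex 0 = mat 1" "dE 0 a = hat a" "Dt 0 a b = 0" "dDt 0 a b = hat b"
  by (simp_all add: Ex_def dE_def Dt_def dDt_def cS_def)

lemma orth_gen:
  fixes v :: vec3
  assumes rel: "2*b - a^2 - b^2*(v$1 * v$1 + v$2 * v$2 + v$3 * v$3) = 0"
  shows "orthogonal_matrix (mat 1 + a *\<^sub>R hat v + b *\<^sub>R (hat v ** hat v))"
  unfolding orthogonal_matrix_def
  apply (simp add: vec_eq_iff forall_3 matrix_matrix_mult_def sum_3 transpose_def mat_def hat_comp)
  using rel apply (intro conjI; algebra)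
  done

lemma orth_Ex: "orthogonal_matrix (Ex v)"
  unfolding Ex_def by (rule orth_gen) (use SC_rel[of v] in \<open>simp add: inner_vec_def sum_3 power2_eq_square\<close>)

lemma orth_inv: "orthogonal_matrix Q \<Longrightarrow> matrix_inv Q = transpose Q"
  unfolding matrix_inv_def orthogonal_matrix_def
  apply (rule some_equality)
   apply simp
  by (metis matrix_mul_assoc matrix_mul_lid matrix_mul_rid)


definition gpos :: "real \<Rightarrow> real" where "gpos y = (max 0 y)^2"

lemma gpos_deriv: "(gpos has_real_derivative 2 * max 0 y) (at y)"
proof (cases "y = 0")
  case True
  have "((\<lambda>h. (gpos (0 + h) - gpos 0) / h) \<longlongrightarrow> 0) (at 0)"
  proof (rule Lim_null_comparison)
    have "norm ((gpos (0 + h) - gpos 0) / h) \<le> \<bar>h\<bar>" for h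
    proof (cases "h = 0")
      case False
      have g0: "gpos 0 = 0" by (simp add: gpos_def)
      have "gpos h \<le> \<bar>h\<bar> * \<bar>h\<bar>" by (auto simp add: gpos_def max_def power2_eq_square)
      moreover have "0 \<le> gpos h" by (simp add: gpos_def)
      ultimately show ?thesis using False by (simp add: g0 abs_div divide_le_eq)
    qed simp
    then show "\<forall>\<^sub>F h in at 0. norm ((gpos (0 + h) - gpos 0) / h) \<le> \<bar>h\<bar>"
      by (simp add: always_eventually)
    show "((\<lambda>h::real. \<bar>h\<bar>) \<longlongrightarrow> 0) (at 0)"
      by (intro tendsto_rabs_zero tendsto_ident_at)
  qed
  then show ?thesis using True by (simp add: DERIV_def)
next
  case False
  show ?thesis
  proof (cases "y > 0")
    case True
    have "((\<lambda>y. y^2) has_real_derivative 2 * y) (at y)"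
      using DERIV_pow[of 2 y] by simp
    then have d: "((\<lambda>y. y^2) has_real_derivative 2 * max 0 y) (at y)"
      using True by (simp add: max_def)
    have "\<And>z. z \<in> {0<..} \<Longrightarrow> z^2 = gpos z" by (simp add: gpos_def max_def)
    from has_field_derivative_transform_within_open[OF d open_greaterThan[of 0] _ this] True
    show ?thesis by simp
  next
    case False
    with \<open>y \<noteq> 0\<close> have "y < 0" by simp
    have "((\<lambda>y. 0) has_real_derivative 0) (at y)" by simp
    then have d: "((\<lambda>y. 0) has_real_derivative 2 * max 0 y) (at y)" using \<open>y < 0\<close> by (simp add: max_def)
    have "\<And>z. z \<in> {..<0} \<Longrightarrow> 0 = gpos z" by (simp add: gpos_def max_def)
    from has_field_derivative_transform_within_open[OF d open_lessThan[of 0] _ this] \<open>y < 0\<close>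
    show ?thesis by simp
  qed
qed

lemma gpos_cont[continuous_intros]: "continuous_on A f \<Longrightarrow> continuous_on A (\<lambda>x. gpos (f x))"
  unfolding gpos_def by (intro continuous_intros)

definition bump :: "real \<Rightarrow> real \<Rightarrow> real" where "bump r x = gpos (r^2 - x^2)"
definition dbump :: "real \<Rightarrow> real \<Rightarrow> real" where "dbump r x = 2 * max 0 (r^2 - x^2) * (- 2 * x)"

lemma bump_deriv: "(bump r has_real_derivative dbump r x) (at x)"
proof -
  have "((\<lambda>x. r^2 - x^2) has_real_derivative (- 2 * x)) (at x)"
    using DERIV_diff[OF DERIV_const[of "r^2" "at x"] DERIV_pow[of 2 x]] by simp
  from DERIV_chain2[OF gpos_deriv this] show ?thesis
    unfolding bump_def[abs_def] dbump_def by simp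
qed

lemma bump_cont[continuous_intros]: "continuous_on A f \<Longrightarrow> continuous_on A (\<lambda>x. bump r (f x))"
  unfolding bump_def by (intro continuous_intros)
lemma dbump_cont[continuous_intros]: "continuous_on A f \<Longrightarrow> continuous_on A (\<lambda>x. dbump r (f x))"
  unfolding dbump_def by (intro continuous_intros)

lemma bump_zero: "r \<le> \<bar>x\<bar> \<Longrightarrow> 0 \<le> r \<Longrightarrow> bump r x = 0"
proof -
  assume "r \<le> \<bar>x\<bar>" "0 \<le> r"
  then have "r^2 \<le> x^2" by (metis abs_le_square_iff abs_of_nonneg)
  then show ?thesis by (simp add: bump_def gpos_def)
qed

lemma bump_nonneg: "0 \<le> bump r x" by (simp add: bump_def gpos_def)

lemma bump_pos0: "r > 0 \<Longrightarrow> bump r 0 > 0" by (simp add: bump_def gpos_def)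

lemma real_deriv_scaleR:
  "(f has_real_derivative f') (at t) \<Longrightarrow> ((\<lambda>\<tau>. f \<tau> *\<^sub>R v) has_vector_derivative (f' *\<^sub>R v)) (at t)"
  unfolding has_vector_derivative_def has_field_derivative_def
  by (auto intro!: derivative_eq_intros simp: fun_eq_iff mult.commute)


lemma cont_field_on: "cont_field F \<Longrightarrow> continuous_on A (\<lambda>(s,t). F s t)"
  unfolding cont_field_def using continuous_on_subset by blast

lemma dint_cbox:
  assumes "continuous_on (cbox (0,T0) (L,T1)) (\<lambda>(s,t). f s t)"
  shows "dint L T0 T1 f = integral (cbox (0,T0) (L,T1)) (\<lambda>(s,t). f s t)"
proof -
  have "integral (cbox (0,T0) (L,T1)) (\<lambda>(s,t). f s t) = integral (cbox 0 L) (\<lambda>s. integral (cbox T0 T1) (\<lambda>t. f s t))"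
    using integral_prod_continuous[OF assms] by simp
  also have "\<dots> = integral (cbox T0 T1) (\<lambda>t. integral (cbox 0 L) (\<lambda>s. f s t))"
    using integral_swap_continuous[of 0 T0 L T1 f] assms by simp
  finally show ?thesis by (simp add: dint_def cbox_interval)
qed

lemma bump_shift_deriv: "((\<lambda>\<tau>. bump r (\<tau> - c)) has_real_derivative dbump r (t - c)) (at t)"
  using DERIV_chain2[OF bump_deriv DERIV_diff[OF DERIV_ident DERIV_const[of c "at t"]]] by simp

definition tf :: "real \<Rightarrow> real \<Rightarrow> real \<Rightarrow> real \<Rightarrow> 3 \<Rightarrow> vec3 field" where
  "tf \<sigma> r s0 t0 i = (\<lambda>s t. (\<sigma> * bump r (s - s0) * bump r (t - t0)) *\<^sub>R axis i 1)"

lemma tf_pt_has: "((\<lambda>\<tau>. tf \<sigma> r s0 t0 i s \<tau>) has_vector_derivative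
    (\<sigma> * bump r (s - s0) * dbump r (t - t0)) *\<^sub>R axis i 1) (at t)"
  unfolding tf_def
  by (rule real_deriv_scaleR) (use DERIV_cmult[OF bump_shift_deriv, of "\<sigma> * bump r (s - s0)" r t0 t] in simp)

lemma tf_ps_has: "((\<lambda>\<sigma>'. tf \<sigma> r s0 t0 i \<sigma>' t) has_vector_derivative
    (\<sigma> * dbump r (s - s0) * bump r (t - t0)) *\<^sub>R axis i 1) (at s)"
  unfolding tf_def
  by (rule real_deriv_scaleR)
     (use DERIV_cmult_right[OF DERIV_cmult[OF bump_shift_deriv, of \<sigma> r s0 s], of "bump r (t - t0)"] in \<open>simp add: mult.assoc\<close>)

lemma tf_pt: "pt (tf \<sigma> r s0 t0 i) = (\<lambda>s t. (\<sigma> * bump r (s - s0) * dbump r (t - t0)) *\<^sub>R axis i 1)"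
  unfolding pt_def by (intro ext vector_derivative_at tf_pt_has)

lemma tf_ps: "ps (tf \<sigma> r s0 t0 i) = (\<lambda>s t. (\<sigma> * dbump r (s - s0) * bump r (t - t0)) *\<^sub>R axis i 1)"
  unfolding ps_def by (intro ext vector_derivative_at tf_ps_has)

lemma tf_C1: "C1_field (tf \<sigma> r s0 t0 i)"
  unfolding C1_field_def cont_field_def
proof (intro conjI allI)
  show "continuous_on UNIV (\<lambda>(s, t). tf \<sigma> r s0 t0 i s t)"
    unfolding tf_def split_beta' by (intro continuous_intros)
  show "continuous_on UNIV (\<lambda>(s, t). pt (tf \<sigma> r s0 t0 i) s t)"
    unfolding tf_pt split_beta' by (intro continuous_intros)
  show "continuous_on UNIV (\<lambda>(s, t). ps (tf \<sigma> r s0 t0 i) s t)"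
    unfolding tf_ps split_beta' by (intro continuous_intros)
  fix s t
  show "(\<lambda>\<tau>. tf \<sigma> r s0 t0 i s \<tau>) differentiable at t"
    using tf_pt_has differentiableI_vector by blast
  show "(\<lambda>\<sigma>'. tf \<sigma> r s0 t0 i \<sigma>' t) differentiable at s"
    using tf_ps_has differentiableI_vector by blast
qed

lemma tf_test:
  assumes r: "r > 0" and K: "cbox (s0 - r, t0 - r) (s0 + r, t0 + r) \<subseteq> box (0,T0) (L,T1)"
  shows "test_field L T0 T1 (tf \<sigma> r s0 t0 i)"
  unfolding test_field_def
proof (intro conjI tf_C1 exI[of _ "cbox (s0 - r, t0 - r) (s0 + r, t0 + r)"])
  show "compact (cbox (s0 - r, t0 - r) (s0 + r, t0 + r))" by simp
  show "cbox (s0 - r, t0 - r) (s0 + r, t0 + r) \<subseteq> box (0, T0) (L, T1)" by (rule K)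
  show "\<forall>s t. (s, t) \<notin> cbox (s0 - r, t0 - r) (s0 + r, t0 + r) \<longrightarrow> tf \<sigma> r s0 t0 i s t = 0"
  proof (intro allI impI)
    fix s t assume "(s, t) \<notin> cbox (s0 - r, t0 - r) (s0 + r, t0 + r)"
    then have "r \<le> \<bar>s - s0\<bar> \<or> r \<le> \<bar>t - t0\<bar>"
      by (auto simp: cbox_Pair_eq cbox_interval)
    then show "tf \<sigma> r s0 t0 i s t = 0" using r by (auto simp: tf_def bump_zero)
  qed
qed


lemma mem_box_pair: fixes a b c d x y :: real shows "(x, y) \<in> box (a, b) (c, d) \<longleftrightarrow> a < x \<and> x < c \<and> b < y \<and> y < d"
  by (auto simp: mem_box Basis_prod_def)

lemma sgn_self: "(x::real) \<noteq> 0 \<Longrightarrow> sgn x * x > 0"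
  by (cases "x > 0") (auto simp: sgn_real_def)

lemma FL:
  fixes f :: "real \<Rightarrow> real \<Rightarrow> vec3"
  assumes L: "0 < L" and T: "T0 < T1"
    and cont: "continuous_on (cbox (0,T0) (L,T1)) (\<lambda>(s,t). f s t)"
    and Z: "\<And>\<eta>. test_field L T0 T1 \<eta> \<Longrightarrow> dint L T0 T1 (\<lambda>s t. f s t \<bullet> \<eta> s t) = 0"
  shows "\<forall>s\<in>{0..L}. \<forall>t\<in>{T0..T1}. f s t = 0"
proof -
  let ?P = "cbox (0,T0) (L,T1)" and ?B = "box (0,T0) (L,T1)"
  have inner: "f s0 t0 = 0" if p: "(s0,t0) \<in> ?B" for s0 t0
  proof (rule ccontr)
    assume ne: "f s0 t0 \<noteq> 0"
    then obtain i where i: "f s0 t0 $ i \<noteq> 0" by (auto simp: vec_eq_iff)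
    define \<sigma> where "\<sigma> = sgn (f s0 t0 $ i)"
    have sig: "\<bar>\<sigma>\<bar> = 1" using i by (simp add: \<sigma>_def abs_sgn_eq)
    define h where "h = (\<lambda>s t. \<sigma> * (f s t $ i))"
    have h0: "h s0 t0 > 0" using sgn_self[OF i] by (simp add: h_def \<sigma>_def)
    obtain d1 where d1: "d1 > 0" "ball (s0,t0) d1 \<subseteq> ?B"
      using open_contains_ball p open_box by blast
    have "(s0,t0) \<in> interior ?P" using p by (simp add: interior_cbox)
    from continuous_on_interior[OF cont this]
    have ce: "\<forall>e>0. \<exists>d>0. \<forall>q. dist q (s0,t0) < d \<longrightarrow> dist ((\<lambda>(s,t). f s t) q) ((\<lambda>(s,t). f s t) (s0,t0)) < e"
      unfolding continuous_at_eps_delta .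
    have hh: "h s0 t0 / 2 > 0" using h0 by simp
    from ce[rule_format, OF hh] obtain d2 where d2a: "d2 > 0"
      and d2b: "\<forall>q. dist q (s0,t0) < d2 \<longrightarrow> dist ((\<lambda>(s,t). f s t) q) ((\<lambda>(s,t). f s t) (s0,t0)) < h s0 t0 / 2"
      by blast
    have d2: "d2 > 0" "\<And>q. dist q (s0,t0) < d2 \<Longrightarrow> dist ((\<lambda>(s,t). f s t) q) (f s0 t0) < h s0 t0 / 2"
      using d2a d2b by auto
    define r where "r = min d1 d2 / 4"
    have r: "r > 0" using d1 d2 by (simp add: r_def)
    have close: "dist (s,t) (s0,t0) < min d1 d2" if "\<bar>s - s0\<bar> \<le> r" "\<bar>t - t0\<bar> \<le> r" for s t
    proof -
      have "dist (s,t) (s0,t0) \<le> \<bar>s - s0\<bar> + \<bar>t - t0\<bar>"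
        using sqrt_sum_squares_le_sum_abs[of "s - s0" "t - t0"] by (simp add: dist_Pair_Pair dist_real_def)
      also have "\<dots> \<le> 2 * r" using that by simp
      also have "\<dots> < min d1 d2" using d1 d2 by (auto simp: r_def min_def)
      finally show ?thesis .
    qed
    have K: "cbox (s0 - r, t0 - r) (s0 + r, t0 + r) \<subseteq> ?B"
    proof
      fix q assume qm: "q \<in> cbox (s0 - r, t0 - r) (s0 + r, t0 + r)"
      obtain s t where q0: "q = (s,t)" by (cases q)
      with qm have "s \<in> {s0-r..s0+r}" "t \<in> {t0-r..t0+r}" by (simp_all add: cbox_Pair_eq cbox_interval)
      then have "\<bar>s - s0\<bar> \<le> r" "\<bar>t - t0\<bar> \<le> r" by (simp_all add: abs_le_iff)
      note q = q0 this
      then have "dist (s,t) (s0,t0) < d1" using close by fastforce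
      then show "q \<in> ?B" using d1 q by (auto simp: dist_commute)
    qed
    define \<eta> where "\<eta> = tf \<sigma> r s0 t0 i"
    have test: "test_field L T0 T1 \<eta>" unfolding \<eta>_def by (rule tf_test[OF r K])
    define G where "G = (\<lambda>(s,t). bump r (s - s0) * bump r (t - t0) * h s t)"
    have fe: "f s t \<bullet> \<eta> s t = G (s,t)" for s t
      by (simp add: \<eta>_def tf_def G_def h_def inner_axis)
    have contG: "continuous_on ?P G"
    proof -
      have c': "continuous_on ?P (\<lambda>q. f (fst q) (snd q))" using cont by (simp add: split_beta')
      have c3: "continuous_on ?P (\<lambda>q. f (fst q) (snd q) $ i)"
        by (rule continuous_on_component[OF c'])
      show ?thesis unfolding G_def h_def split_beta'
        by (intro continuous_on_mult continuous_on_const c3 bump_cont continuous_on_diff continuous_on_fst continuous_on_snd continuous_on_id)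
    qed
    have eta: "(\<lambda>(s,t). G (s,t)) = G" by auto
    have "dint L T0 T1 (\<lambda>s t. f s t \<bullet> \<eta> s t) = dint L T0 T1 (\<lambda>s t. G (s,t))"
      by (simp only: fe)
    also have "\<dots> = integral ?P G"
      by (subst dint_cbox) (simp_all only: eta contG)
    finally have "dint L T0 T1 (\<lambda>s t. f s t \<bullet> \<eta> s t) = integral ?P G" .
    with Z[OF test] have i0: "integral ?P G = 0" by simp
    have "G integrable_on ?P" using integrable_continuous[OF contG] .
    from integrable_integral[OF this] have int0: "(G has_integral 0) ?P" unfolding i0 .
    have nn: "0 \<le> G q" if "q \<in> ?B" for q
    proof (cases q)
      case (Pair s t)
      show ?thesis
      proof (cases "\<bar>s - s0\<bar> < r \<and> \<bar>t - t0\<bar> < r")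
        case True
        then have "dist (s,t) (s0,t0) < d2" using close[of s t] by simp
        from d2(2)[OF this] have "norm (f s t - f s0 t0) < h s0 t0 / 2" by (simp add: dist_norm)
        moreover have "\<bar>(f s t - f s0 t0) $ i\<bar> \<le> norm (f s t - f s0 t0)" by (rule component_le_norm_cart)
        moreover have "\<bar>h s t - h s0 t0\<bar> = \<bar>(f s t - f s0 t0) $ i\<bar>"
          using sig by (simp add: h_def right_diff_distrib[symmetric] abs_mult)
        ultimately have "h s t > 0" using h0 by linarith
        then show ?thesis using Pair by (simp add: G_def bump_nonneg)
      next
        case False
        then have "bump r (s - s0) = 0 \<or> bump r (t - t0) = 0" using r by (auto intro: bump_zero)
        then show ?thesis using Pair by (auto simp: G_def)
      qed
    qed
    have Bne: "?B \<noteq> {}" using p by blast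
    have "(s0,t0) \<in> ?P" using p box_subset_cbox by blast
    from has_integral_0_cbox_imp_0[OF contG nn int0 Bne this] have "G (s0,t0) = 0" .
    moreover have "G (s0,t0) > 0" using h0 bump_pos0[OF r] by (simp add: G_def)
    ultimately show False by simp
  qed
  have "(L/2, (T0+T1)/2) \<in> ?B" using L T by (simp add: mem_box_pair)
  then have Bne: "?B \<noteq> {}" by blast
  have clo: "closure ?B = ?P" using closure_box[OF Bne] .
  show ?thesis
  proof (intro ballI)
    fix s t assume "s \<in> {0..L}" "t \<in> {T0..T1}"
    then have st: "(s,t) \<in> closure ?B" unfolding clo by (simp add: cbox_Pair_eq cbox_interval)
    have c2: "continuous_on (closure ?B) (\<lambda>(s,t). f s t)" using cont clo by simp
    have z: "\<And>q. q \<in> ?B \<Longrightarrow> (\<lambda>(s,t). f s t) q = 0" using inner by auto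
    have "(\<lambda>(s,t). f s t) (s,t) = 0"
      by (rule continuous_constant_on_closure[OF c2 z st])
    then show "f s t = 0" by simp
  qed
qed


lemma ibp1:
  fixes u v :: "real \<Rightarrow> vec3"
  assumes ab: "a \<le> b" and du: "\<And>x. (u has_vector_derivative u' x) (at x)"
    and dv: "\<And>x. (v has_vector_derivative v' x) (at x)"
    and cu: "continuous_on {a..b} u'" and cv: "continuous_on {a..b} v'"
    and va: "v a = 0" and vb: "v b = 0"
  shows "integral {a..b} (\<lambda>x. u x \<bullet> v' x) = - integral {a..b} (\<lambda>x. u' x \<bullet> v x)"
proof -
  have cu0: "continuous_on {a..b} u"
    using du by (intro continuous_at_imp_continuous_on ballI has_vector_derivative_continuous) auto
  have cv0: "continuous_on {a..b} v"
    using dv by (intro continuous_at_imp_continuous_on ballI has_vector_derivative_continuous) auto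
  let ?I = "integral {a..b} (\<lambda>x. u x \<bullet> v' x)"
  have "(\<lambda>x. u x \<bullet> v' x) integrable_on {a..b}"
    by (rule integrable_continuous_real) (intro continuous_intros cu0 cv)
  then have "((\<lambda>x. u x \<bullet> v' x) has_integral u b \<bullet> v b - u a \<bullet> v a - (- ?I)) {a..b}"
    using va vb by (simp add: integrable_integral)
  from integration_by_parts[OF bounded_bilinear_inner ab cu0 cv0 du dv this]
  have "((\<lambda>x. u' x \<bullet> v x) has_integral - ?I) {a..b}" by simp
  then show ?thesis by (simp add: integral_unique)
qed

lemma cf_s: "cont_field F \<Longrightarrow> continuous_on A (\<lambda>s. F s t)"
proof -
  assume "cont_field F"
  then have c: "continuous_on UNIV (\<lambda>(s,t). F s t)" by (simp add: cont_field_def)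
  have "continuous_on A (\<lambda>s. (s, t))" by (intro continuous_intros)
  from continuous_on_compose2[OF c this] show ?thesis by simp
qed

lemma cf_t: "cont_field F \<Longrightarrow> continuous_on A (\<lambda>t. F s t)"
proof -
  assume "cont_field F"
  then have c: "continuous_on UNIV (\<lambda>(s,t). F s t)" by (simp add: cont_field_def)
  have "continuous_on A (\<lambda>t. (s, t))" by (intro continuous_intros)
  from continuous_on_compose2[OF c this] show ?thesis by simp
qed

lemma C1_cont: "C1_field F \<Longrightarrow> cont_field F" "C1_field F \<Longrightarrow> cont_field (pt F)" "C1_field F \<Longrightarrow> cont_field (ps F)"
  by (simp_all add: C1_field_def)

lemma C1_pt_has: "C1_field F \<Longrightarrow> ((\<lambda>\<tau>. F s \<tau>) has_vector_derivative pt F s t) (at t)"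
  unfolding C1_field_def pt_def using vector_derivative_works by blast

lemma C1_ps_has: "C1_field F \<Longrightarrow> ((\<lambda>\<sigma>. F \<sigma> t) has_vector_derivative ps F s t) (at s)"
  unfolding C1_field_def ps_def using vector_derivative_works by blast

lemma test_C1: "test_field L T0 T1 \<eta> \<Longrightarrow> C1_field \<eta>"
  by (simp add: test_field_def)

lemma test_out: 
  assumes "test_field L T0 T1 \<eta>" "(s, t) \<notin> box (0, T0) (L, T1)"
  shows "\<eta> s t = 0"
  using assms unfolding test_field_def by blast

lemma test_bd:
  fixes L T0 T1 :: real
  assumes "test_field L T0 T1 \<eta>"
  shows "\<eta> 0 t = 0" "\<eta> L t = 0" "\<eta> s T0 = 0" "\<eta> s T1 = 0"
  using test_out[OF assms] by (simp_all add: mem_box_pair)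

lemma cont_field_cbox: "cont_field F \<Longrightarrow> continuous_on A (\<lambda>(s,t). F s t)"
  by (rule cont_field_on)

lemma dint_swap:
  assumes "continuous_on (cbox (0,T0) (L,T1)) (\<lambda>(s,t). f s t)"
  shows "dint L T0 T1 f = integral {0..L} (\<lambda>s. integral {T0..T1} (\<lambda>t. f s t))"
  using integral_swap_continuous[of 0 T0 L T1 f] assms by (simp add: dint_def cbox_interval)

lemma ibp_s:
  fixes a \<eta> :: "vec3 field"
  assumes a: "C1_field a" and \<eta>: "test_field L T0 T1 \<eta>" and L: "0 \<le> L"
  shows "dint L T0 T1 (\<lambda>s t. a s t \<bullet> ps \<eta> s t) = - dint L T0 T1 (\<lambda>s t. ps a s t \<bullet> \<eta> s t)"
proof -
  have e: "integral {0..L} (\<lambda>s. a s t \<bullet> ps \<eta> s t) = - integral {0..L} (\<lambda>s. ps a s t \<bullet> \<eta> s t)" for t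
    by (rule ibp1[OF L C1_ps_has[OF a] C1_ps_has[OF test_C1[OF \<eta>]] cf_s[OF C1_cont(3)[OF a]]
          cf_s[OF C1_cont(3)[OF test_C1[OF \<eta>]]] test_bd(1)[OF \<eta>] test_bd(2)[OF \<eta>]])
  show ?thesis unfolding dint_def e by (simp add: integral_neg)
qed

lemma ibp_t:
  fixes a \<eta> :: "vec3 field"
  assumes a: "C1_field a" and \<eta>: "test_field L T0 T1 \<eta>" and T: "T0 \<le> T1"
  shows "dint L T0 T1 (\<lambda>s t. a s t \<bullet> pt \<eta> s t) = - dint L T0 T1 (\<lambda>s t. pt a s t \<bullet> \<eta> s t)"
proof -
  have e: "integral {T0..T1} (\<lambda>t. a s t \<bullet> pt \<eta> s t) = - integral {T0..T1} (\<lambda>t. pt a s t \<bullet> \<eta> s t)" for s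
    by (rule ibp1[OF T C1_pt_has[OF a] C1_pt_has[OF test_C1[OF \<eta>]] cf_t[OF C1_cont(2)[OF a]]
          cf_t[OF C1_cont(2)[OF test_C1[OF \<eta>]]] test_bd(3)[OF \<eta>] test_bd(4)[OF \<eta>]])
  have c1: "continuous_on (cbox (0,T0) (L,T1)) (\<lambda>(s,t). a s t \<bullet> pt \<eta> s t)"
    using cont_field_on[OF C1_cont(1)[OF a]] cont_field_on[OF C1_cont(2)[OF test_C1[OF \<eta>]]]
    unfolding split_beta' by (intro continuous_intros) auto
  have c2: "continuous_on (cbox (0,T0) (L,T1)) (\<lambda>(s,t). pt a s t \<bullet> \<eta> s t)"
    using cont_field_on[OF C1_cont(2)[OF a]] cont_field_on[OF C1_cont(1)[OF test_C1[OF \<eta>]]]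
    unfolding split_beta' by (intro continuous_intros) auto
  show ?thesis unfolding dint_swap[OF c1] dint_swap[OF c2] e by (simp add: integral_neg)
qed


lemma cont_mm[continuous_intros]: "continuous_on A f \<Longrightarrow> continuous_on A g \<Longrightarrow>
   continuous_on A (\<lambda>x. (f x :: real^'n^'m) ** (g x :: real^'p^'n))"
  by (rule bounded_bilinear.continuous_on[OF bounded_bilinear_mm])
lemma cont_mv[continuous_intros]: "continuous_on A f \<Longrightarrow> continuous_on A g \<Longrightarrow>
   continuous_on A (\<lambda>x. (f x :: real^'n^'m) *v (g x :: real^'n))"
  by (rule bounded_bilinear.continuous_on[OF bounded_bilinear_mv])
lemma cont_hat[continuous_intros]: "continuous_on A f \<Longrightarrow> continuous_on A (\<lambda>x. hat (f x))"
  by (rule bounded_linear.continuous_on[OF bounded_linear_hat])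
lemma cont_vee[continuous_intros]: "continuous_on A f \<Longrightarrow> continuous_on A (\<lambda>x. vee (f x))"
  by (rule bounded_linear.continuous_on[OF bounded_linear_vee])
lemma cont_tr[continuous_intros]: "continuous_on A f \<Longrightarrow> continuous_on A (\<lambda>x. transpose (f x :: real^'n^'m))"
  by (rule bounded_linear.continuous_on[OF bounded_linear_transpose])

lemma vd_mm[derivative_intros]: "(f has_vector_derivative f') (at x within s) \<Longrightarrow> (g has_vector_derivative g') (at x within s) \<Longrightarrow>
   ((\<lambda>x. (f x :: real^'n^'m) ** (g x :: real^'p^'n)) has_vector_derivative (f x ** g' + f' ** g x)) (at x within s)"
  by (rule bounded_bilinear.has_vector_derivative[OF bounded_bilinear_mm])
lemma vd_mv[derivative_intros]: "(f has_vector_derivative f') (at x within s) \<Longrightarrow> (g has_vector_derivative g') (at x within s) \<Longrightarrow>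
   ((\<lambda>x. (f x :: real^'n^'m) *v (g x :: real^'n)) has_vector_derivative (f x *v g' + f' *v g x)) (at x within s)"
  by (rule bounded_bilinear.has_vector_derivative[OF bounded_bilinear_mv])
lemma vd_inner[derivative_intros]: "(f has_vector_derivative f') (at x within s) \<Longrightarrow> (g has_vector_derivative g') (at x within s) \<Longrightarrow>
   ((\<lambda>x. (f x :: vec3) \<bullet> g x) has_vector_derivative (f x \<bullet> g' + f' \<bullet> g x)) (at x within s)"
  by (rule bounded_bilinear.has_vector_derivative[OF bounded_bilinear_inner])
lemma vd_vee[derivative_intros]: "(f has_vector_derivative f') F \<Longrightarrow> ((\<lambda>x. vee (f x)) has_vector_derivative vee f') F"
  by (rule bounded_linear.has_vector_derivative[OF bounded_linear_vee])
lemma vd_tr[derivative_intros]: "(f has_vector_derivative f') F \<Longrightarrow>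
   ((\<lambda>x. transpose (f x :: real^'n^'m)) has_vector_derivative transpose f') F"
  by (rule bounded_linear.has_vector_derivative[OF bounded_linear_transpose])

lemma vd_Ex: "((\<lambda>e. Ex (e *\<^sub>R a)) has_vector_derivative dE x a) (at x within s)"
  using Ex_scale_deriv has_vector_derivative_at_within by blast
lemma vd_Dt: "((\<lambda>e. Dt e a b) has_vector_derivative dDt x a b) (at x within s)"
  using Dt_deriv has_vector_derivative_at_within by blast

definition IL :: "real \<Rightarrow> vec3 \<Rightarrow> vec3 \<Rightarrow> vec3 \<Rightarrow> mat3 \<Rightarrow> mat3 \<Rightarrow> mat3 \<Rightarrow> vec3 \<Rightarrow> vec3 \<Rightarrow> vec3
   \<Rightarrow> vec3 \<Rightarrow> vec3 \<Rightarrow> vec3 \<Rightarrow> vec3 \<Rightarrow> vec3 \<Rightarrow> vec3 \<Rightarrow> vec3 \<Rightarrow> vec3 \<Rightarrow> vec3 \<Rightarrow> vec3 \<Rightarrow> real" where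
  "IL e a u1 u2 A At As x xt xs p P R m M w W r g G =
     p \<bullet> (vee ((transpose (Ex (e *\<^sub>R a)) ** transpose A) ** (At ** Ex (e *\<^sub>R a) + A ** Dt e a u1)) - w)
   + P \<bullet> (vee ((transpose (Ex (e *\<^sub>R a)) ** transpose A) ** (As ** Ex (e *\<^sub>R a) + A ** Dt e a u2)) - W)
   + R \<bullet> ((transpose (Ex (e *\<^sub>R a)) ** transpose A) *v x - r)
   + m \<bullet> ((transpose (Ex (e *\<^sub>R a)) ** transpose A) *v xt - g)
   + M \<bullet> ((transpose (Ex (e *\<^sub>R a)) ** transpose A) *v xs - G)"

definition dIL :: "real \<Rightarrow> vec3 \<Rightarrow> vec3 \<Rightarrow> vec3 \<Rightarrow> mat3 \<Rightarrow> mat3 \<Rightarrow> mat3 \<Rightarrow> vec3 \<Rightarrow> vec3 \<Rightarrow> vec3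
   \<Rightarrow> vec3 \<Rightarrow> vec3 \<Rightarrow> vec3 \<Rightarrow> vec3 \<Rightarrow> vec3 \<Rightarrow> real" where
  "dIL e a u1 u2 A At As x xt xs p P R m M =
     p \<bullet> vee ((transpose (dE e a) ** transpose A) ** (At ** Ex (e *\<^sub>R a) + A ** Dt e a u1)
              + (transpose (Ex (e *\<^sub>R a)) ** transpose A) ** (At ** dE e a + A ** dDt e a u1))
   + P \<bullet> vee ((transpose (dE e a) ** transpose A) ** (As ** Ex (e *\<^sub>R a) + A ** Dt e a u2)
              + (transpose (Ex (e *\<^sub>R a)) ** transpose A) ** (As ** dE e a + A ** dDt e a u2))
   + R \<bullet> ((transpose (dE e a) ** transpose A) *v x)
   + m \<bullet> ((transpose (dE e a) ** transpose A) *v xt)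
   + M \<bullet> ((transpose (dE e a) ** transpose A) *v xs)"

lemma IL_deriv: "((\<lambda>e. IL e a u1 u2 A At As x xt xs p P R m M w W r g G) has_real_derivative
    dIL e a u1 u2 A At As x xt xs p P R m M) (at e within U)"
  unfolding IL_def[abs_def] dIL_def has_real_derivative_iff_has_vector_derivative
  apply (rule derivative_eq_intros vd_Ex vd_Dt refl)+
  apply (simp add: algebra_simps)
  done

lemma transpose_hat[simp]: "transpose (hat a) = - hat a"
  by (simp add: vec_eq_iff forall_3 transpose_def hat_comp)

lemma neg_mm[simp]: "(- X) ** (Y::real^'p^'n) = - (X ** Y :: real^'p^'m)"
  using bounded_bilinear.minus_left[OF bounded_bilinear_mm] .
lemma mm_neg[simp]: "X ** (- Y::real^'p^'n) = - (X ** Y :: real^'p^'m)"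
  using bounded_bilinear.minus_right[OF bounded_bilinear_mm] .
lemma neg_mv[simp]: "(- X) *v (y::real^'n) = - (X *v y :: real^'m)"
  using bounded_bilinear.minus_left[OF bounded_bilinear_mv] .
lemma mm_zero[simp]: "X ** (0::real^'p^'n) = (0 :: real^'p^'m)"
  using bounded_bilinear.zero_right[OF bounded_bilinear_mm] .
lemma zero_mm[simp]: "(0::real^'n^'m) ** (X::real^'p^'n) = 0"
  using bounded_bilinear.zero_left[OF bounded_bilinear_mm] .

lemma vee_add[simp]: "vee (X + Y) = vee X + vee Y" using linear_add[OF linear_vee] .
lemma vee_diff[simp]: "vee (X - Y) = vee X - vee Y" using linear_diff[OF linear_vee] .
lemma vee_neg[simp]: "vee (- X) = - vee X" using linear_neg[OF linear_vee] .

lemma vee_comm: "vee (hat w ** hat a) - vee (hat a ** hat w) = cross3 w a"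
  by (simp add: vec_eq_iff forall_3 vee_def matrix_matrix_mult_def sum_3 hat_comp cross3_def algebra_simps)

lemma dIL0:
  assumes o: "transpose A ** A = mat 1" and h1: "transpose A ** At = hat w" and h2: "transpose A ** As = hat W"
    and h3: "transpose A *v x = r" and h4: "transpose A *v xt = g" and h5: "transpose A *v xs = G"
  shows "dIL 0 a u1 u2 A At As x xt xs p P R m M = p \<bullet> cross3 w a + p \<bullet> u1 + P \<bullet> cross3 W a + P \<bullet> u2
     - R \<bullet> cross3 a r - m \<bullet> cross3 a g - M \<bullet> cross3 a G"
proof -
  have n1: "hat a ** transpose A ** At = hat a ** hat w"
    by (simp add: matrix_mul_assoc[symmetric] h1)
  have n2: "transpose A ** (A ** hat u1 + At ** hat a) = hat u1 + hat w ** hat a"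
    by (simp add: matrix_add_ldistrib matrix_mul_assoc h1 o)
  have n3: "hat a ** transpose A ** As = hat a ** hat W"
    by (simp add: matrix_mul_assoc[symmetric] h2)
  have n4: "transpose A ** (A ** hat u2 + As ** hat a) = hat u2 + hat W ** hat a"
    by (simp add: matrix_add_ldistrib matrix_mul_assoc h2 o)
  have v1: "hat a ** transpose A *v x = cross3 a r"
    by (simp add: matrix_vector_mul_assoc[symmetric] h3 hat_apply del: transpose_matrix_vector)
  have v2: "hat a ** transpose A *v xt = cross3 a g"
    by (simp add: matrix_vector_mul_assoc[symmetric] h4 hat_apply del: transpose_matrix_vector)
  have v3: "hat a ** transpose A *v xs = cross3 a G"
    by (simp add: matrix_vector_mul_assoc[symmetric] h5 hat_apply del: transpose_matrix_vector)
  have c1: "vee (hat w ** hat a) = vee (hat a ** hat w) + cross3 w a" using vee_comm[of w a] by (simp add: algebra_simps)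
  have c2: "vee (hat W ** hat a) = vee (hat a ** hat W) + cross3 W a" using vee_comm[of W a] by (simp add: algebra_simps)
  show ?thesis
    unfolding dIL_def
    by (simp add: n1 n2 n3 n4 v1 v2 v3 c1 c2 inner_add_right inner_diff_right algebra_simps)
qed


lemma cont_Ex[continuous_intros]: "continuous_on A f \<Longrightarrow> continuous_on A (\<lambda>x. Ex (f x))"
  unfolding Ex_def by (intro continuous_intros) simp_all
lemma cont_Dt[continuous_intros]: "continuous_on A e \<Longrightarrow> continuous_on A f \<Longrightarrow> continuous_on A g \<Longrightarrow>
   continuous_on A (\<lambda>x. Dt (e x) (f x) (g x))"
  unfolding Dt_def by (intro continuous_intros) simp_all
lemma cont_dE[continuous_intros]: "continuous_on A e \<Longrightarrow> continuous_on A f \<Longrightarrow> continuous_on A (\<lambda>x. dE (e x) (f x))"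
  unfolding dE_def by (intro continuous_intros) simp_all
lemma cont_dDt[continuous_intros]: "continuous_on A e \<Longrightarrow> continuous_on A f \<Longrightarrow> continuous_on A g \<Longrightarrow>
   continuous_on A (\<lambda>x. dDt (e x) (f x) (g x))"
  unfolding dDt_def by (intro continuous_intros) simp_all

lemma cfp: "cont_field F \<Longrightarrow> continuous_on A (\<lambda>p. F (fst p) (snd p))"
  using cont_field_on[of F A] by (simp add: split_beta')

lemma cfq: "cont_field F \<Longrightarrow> continuous_on A (\<lambda>q. F (fst (snd q)) (snd (snd q)))"
proof -
  assume "cont_field F"
  from cfp[OF this, of UNIV] have "continuous_on UNIV (\<lambda>p. F (fst p) (snd p))" .
  from continuous_on_compose2[OF this continuous_on_snd[OF continuous_on_id]] show ?thesis by simp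
qed

lemma pt_Lam_eps:
  assumes Lam: "C1_field \<Lambda>" and eta: "C1_field \<eta>"
  shows "pt (\<lambda>s t. \<Lambda> s t ** so3_exp (e *\<^sub>R \<eta> s t)) s t = pt \<Lambda> s t ** Ex (e *\<^sub>R \<eta> s t) + \<Lambda> s t ** Dt e (\<eta> s t) (pt \<eta> s t)"
proof -
  have u: "((\<lambda>\<tau>. e *\<^sub>R \<eta> s \<tau>) has_vector_derivative e *\<^sub>R pt \<eta> s t) (at t)"
    using bounded_linear.has_vector_derivative[OF bounded_linear_scaleR_right C1_pt_has[OF eta]] .
  have "((\<lambda>\<tau>. \<Lambda> s \<tau> ** Ex (e *\<^sub>R \<eta> s \<tau>)) has_vector_derivative
      (\<Lambda> s t ** dEx (e *\<^sub>R \<eta> s t) (e *\<^sub>R pt \<eta> s t) + pt \<Lambda> s t ** Ex (e *\<^sub>R \<eta> s t))) (at t)"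
    by (rule vd_mm[OF C1_pt_has[OF Lam] Ex_curve[OF u]])
  then show ?thesis unfolding pt_def so3_exp_Ex dEx_scale
    by (simp add: vector_derivative_at add.commute)
qed

lemma ps_Lam_eps:
  assumes Lam: "C1_field \<Lambda>" and eta: "C1_field \<eta>"
  shows "ps (\<lambda>s t. \<Lambda> s t ** so3_exp (e *\<^sub>R \<eta> s t)) s t = ps \<Lambda> s t ** Ex (e *\<^sub>R \<eta> s t) + \<Lambda> s t ** Dt e (\<eta> s t) (ps \<eta> s t)"
proof -
  have u: "((\<lambda>\<sigma>. e *\<^sub>R \<eta> \<sigma> t) has_vector_derivative e *\<^sub>R ps \<eta> s t) (at s)"
    using bounded_linear.has_vector_derivative[OF bounded_linear_scaleR_right C1_ps_has[OF eta]] .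
  have "((\<lambda>\<sigma>. \<Lambda> \<sigma> t ** Ex (e *\<^sub>R \<eta> \<sigma> t)) has_vector_derivative
      (\<Lambda> s t ** dEx (e *\<^sub>R \<eta> s t) (e *\<^sub>R ps \<eta> s t) + ps \<Lambda> s t ** Ex (e *\<^sub>R \<eta> s t))) (at s)"
    by (rule vd_mm[OF C1_ps_has[OF Lam] Ex_curve[OF u]])
  then show ?thesis unfolding ps_def so3_exp_Ex dEx_scale
    by (simp add: vector_derivative_at add.commute)
qed

lemma inv_Lam_eps:
  assumes "rotation_matrix A"
  shows "matrix_inv (A ** so3_exp v) = transpose (Ex v) ** transpose A"
proof -
  have "orthogonal_matrix (A ** so3_exp v)"
    using assms orth_Ex[of v] by (simp add: rotation_matrix_def so3_exp_Ex orthogonal_matrix_mul)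
  then show ?thesis by (simp add: orth_inv matrix_transpose_mul so3_exp_Ex)
qed


lemma action_Lam_deriv:
  fixes L T0 T1 :: real and l :: lagr and \<Lambda> :: "mat3 field"
    and x w g W G \<rho> \<pi> Pm R \<mu> M \<eta> :: "vec3 field"
  assumes rot: "\<forall>s t. rotation_matrix (\<Lambda> s t)" and CL: "C1_field \<Lambda>" and Cx: "C1_field x"
    and c1: "cont_field w" and c2: "cont_field g" and c3: "cont_field W" and c4: "cont_field G" and c5: "cont_field \<rho>"
    and c6: "cont_field \<pi>" and c7: "cont_field Pm" and c8: "cont_field R" and c9: "cont_field \<mu>" and c10: "cont_field M"
    and eta: "C1_field \<eta>"
  shows "((\<lambda>e. action L T0 T1 l (\<lambda>s t. \<Lambda> s t ** so3_exp (e *\<^sub>R \<eta> s t)) x w g W G \<rho> \<pi> Pm R \<mu> M) has_real_derivative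
     dint L T0 T1 (\<lambda>s t. dIL 0 (\<eta> s t) (pt \<eta> s t) (ps \<eta> s t) (\<Lambda> s t) (pt \<Lambda> s t) (ps \<Lambda> s t)
        (x s t) (pt x s t) (ps x s t) (\<pi> s t) (Pm s t) (R s t) (\<mu> s t) (M s t))) (at 0)"
proof -
  let ?P = "cbox (0,T0) (L,T1)" and ?U = "{-1..1::real}"
  define F where "F e p = IL e (\<eta> (fst p) (snd p)) (pt \<eta> (fst p) (snd p)) (ps \<eta> (fst p) (snd p))
     (\<Lambda> (fst p) (snd p)) (pt \<Lambda> (fst p) (snd p)) (ps \<Lambda> (fst p) (snd p))
     (x (fst p) (snd p)) (pt x (fst p) (snd p)) (ps x (fst p) (snd p))
     (\<pi> (fst p) (snd p)) (Pm (fst p) (snd p)) (R (fst p) (snd p)) (\<mu> (fst p) (snd p)) (M (fst p) (snd p))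
     (w (fst p) (snd p)) (W (fst p) (snd p)) (\<rho> (fst p) (snd p)) (g (fst p) (snd p)) (G (fst p) (snd p))" for e p
  define Fx where "Fx e p = dIL e (\<eta> (fst p) (snd p)) (pt \<eta> (fst p) (snd p)) (ps \<eta> (fst p) (snd p))
     (\<Lambda> (fst p) (snd p)) (pt \<Lambda> (fst p) (snd p)) (ps \<Lambda> (fst p) (snd p))
     (x (fst p) (snd p)) (pt x (fst p) (snd p)) (ps x (fst p) (snd p))
     (\<pi> (fst p) (snd p)) (Pm (fst p) (snd p)) (R (fst p) (snd p)) (\<mu> (fst p) (snd p)) (M (fst p) (snd p))" for e p
  note fs = cfp[OF C1_cont(1)[OF eta]] cfp[OF C1_cont(2)[OF eta]] cfp[OF C1_cont(3)[OF eta]]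
    cfp[OF C1_cont(1)[OF CL]] cfp[OF C1_cont(2)[OF CL]] cfp[OF C1_cont(3)[OF CL]]
    cfp[OF C1_cont(1)[OF Cx]] cfp[OF C1_cont(2)[OF Cx]] cfp[OF C1_cont(3)[OF Cx]]
    cfp[OF c1] cfp[OF c2] cfp[OF c3] cfp[OF c4] cfp[OF c5] cfp[OF c6] cfp[OF c7] cfp[OF c8] cfp[OF c9] cfp[OF c10]
  note fq = cfq[OF C1_cont(1)[OF eta]] cfq[OF C1_cont(2)[OF eta]] cfq[OF C1_cont(3)[OF eta]]
    cfq[OF C1_cont(1)[OF CL]] cfq[OF C1_cont(2)[OF CL]] cfq[OF C1_cont(3)[OF CL]]
    cfq[OF C1_cont(1)[OF Cx]] cfq[OF C1_cont(2)[OF Cx]] cfq[OF C1_cont(3)[OF Cx]]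
    cfq[OF c6] cfq[OF c7] cfq[OF c8] cfq[OF c9] cfq[OF c10]
  have contF: "continuous_on A (F e)" for e A
    unfolding F_def[abs_def] IL_def by (intro continuous_intros fs)
  have contFx: "continuous_on (?U \<times> ?P) (\<lambda>(e, p). Fx e p)"
    unfolding Fx_def split_beta' dIL_def by (intro continuous_intros fq)
  have contFx0: "continuous_on ?P (Fx 0)"
    unfolding Fx_def[abs_def] dIL_def by (intro continuous_intros fs)
  have act: "action L T0 T1 l (\<lambda>s t. \<Lambda> s t ** so3_exp (e *\<^sub>R \<eta> s t)) x w g W G \<rho> \<pi> Pm R \<mu> M
     = lag_int T0 T1 l w g W G \<rho> + integral ?P (F e)" for e
  proof -
    have eq: "(\<lambda>s t. \<pi> s t \<bullet> (vee (matrix_inv (\<Lambda> s t ** so3_exp (e *\<^sub>R \<eta> s t)) ** pt (\<lambda>s t. \<Lambda> s t ** so3_exp (e *\<^sub>R \<eta> s t)) s t) - w s t)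
       + Pm s t \<bullet> (vee (matrix_inv (\<Lambda> s t ** so3_exp (e *\<^sub>R \<eta> s t)) ** ps (\<lambda>s t. \<Lambda> s t ** so3_exp (e *\<^sub>R \<eta> s t)) s t) - W s t)
       + R s t \<bullet> (matrix_inv (\<Lambda> s t ** so3_exp (e *\<^sub>R \<eta> s t)) *v x s t - \<rho> s t)
       + \<mu> s t \<bullet> (matrix_inv (\<Lambda> s t ** so3_exp (e *\<^sub>R \<eta> s t)) *v pt x s t - g s t)
       + M s t \<bullet> (matrix_inv (\<Lambda> s t ** so3_exp (e *\<^sub>R \<eta> s t)) *v ps x s t - G s t))
      = (\<lambda>s t. F e (s, t))"
    proof (intro ext)
      fix s t
      show "\<pi> s t \<bullet> (vee (matrix_inv (\<Lambda> s t ** so3_exp (e *\<^sub>R \<eta> s t)) ** pt (\<lambda>s t. \<Lambda> s t ** so3_exp (e *\<^sub>R \<eta> s t)) s t) - w s t)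
       + Pm s t \<bullet> (vee (matrix_inv (\<Lambda> s t ** so3_exp (e *\<^sub>R \<eta> s t)) ** ps (\<lambda>s t. \<Lambda> s t ** so3_exp (e *\<^sub>R \<eta> s t)) s t) - W s t)
       + R s t \<bullet> (matrix_inv (\<Lambda> s t ** so3_exp (e *\<^sub>R \<eta> s t)) *v x s t - \<rho> s t)
       + \<mu> s t \<bullet> (matrix_inv (\<Lambda> s t ** so3_exp (e *\<^sub>R \<eta> s t)) *v pt x s t - g s t)
       + M s t \<bullet> (matrix_inv (\<Lambda> s t ** so3_exp (e *\<^sub>R \<eta> s t)) *v ps x s t - G s t) = F e (s, t)"
        unfolding F_def IL_def fst_conv snd_conv inv_Lam_eps[OF rot[rule_format]] pt_Lam_eps[OF CL eta] ps_Lam_eps[OF CL eta]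
        by (rule refl)
    qed
    have cF: "continuous_on ?P (\<lambda>(s, t). F e (s, t))" using contF[where e=e and A="?P"] by (simp add: split_beta')
    show ?thesis unfolding action_def eq dint_cbox[OF cF] by (simp add: split_beta')
  qed
  have d: "((\<lambda>e. integral ?P (F e)) has_field_derivative integral ?P (Fx 0)) (at 0 within ?U)"
  proof (rule leibniz_rule_field_derivative)
    show "((\<lambda>e. F e p) has_field_derivative Fx e p) (at e within ?U)" if "e \<in> ?U" "p \<in> ?P" for e p
      unfolding F_def Fx_def by (rule IL_deriv)
    show "F e integrable_on ?P" if "e \<in> ?U" for e
      by (rule integrable_continuous[OF contF])
    show "continuous_on (?U \<times> ?P) (\<lambda>(e, p). Fx e p)" by (rule contFx)
  qed auto
  then have d': "((\<lambda>e. integral ?P (F e)) has_field_derivative integral ?P (Fx 0)) (at 0)"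
    by (simp add: at_within_Icc_at)
  have i0: "integral ?P (Fx 0) = dint L T0 T1 (\<lambda>s t. dIL 0 (\<eta> s t) (pt \<eta> s t) (ps \<eta> s t) (\<Lambda> s t) (pt \<Lambda> s t) (ps \<Lambda> s t)
        (x s t) (pt x s t) (ps x s t) (\<pi> s t) (Pm s t) (R s t) (\<mu> s t) (M s t))"
  proof -
    have c: "continuous_on ?P (\<lambda>(s,t). Fx 0 (s,t))" using contFx0 by (simp add: split_beta')
    show ?thesis unfolding Fx_def[symmetric] dint_cbox[OF c[unfolded Fx_def fst_conv snd_conv]]
      by (simp add: Fx_def[abs_def] split_beta')
  qed
  show ?thesis unfolding act i0[symmetric]
    using DERIV_add[OF DERIV_const d'] by simp
qed


lemma dint_cong:
  assumes "\<And>s t. s \<in> {0..L} \<Longrightarrow> t \<in> {T0..T1} \<Longrightarrow> f s t = g s t"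
  shows "dint L T0 T1 f = dint L T0 T1 g"
  unfolding dint_def using assms by (intro integral_cong) auto

lemma dint_zero:
  assumes "\<And>s t. s \<in> {0..L} \<Longrightarrow> t \<in> {T0..T1} \<Longrightarrow> f s t = 0"
  shows "dint L T0 T1 f = 0"
  using dint_cong[of L T0 T1 f "\<lambda>s t. 0", OF assms] by (simp add: dint_def)

lemma dint_add:
  assumes "continuous_on (cbox (0,T0) (L,T1)) (\<lambda>(s,t). f s t)" "continuous_on (cbox (0,T0) (L,T1)) (\<lambda>(s,t). g s t)"
  shows "dint L T0 T1 (\<lambda>s t. f s t + g s t) = dint L T0 T1 f + dint L T0 T1 g"
proof -
  have c: "continuous_on (cbox (0,T0) (L,T1)) (\<lambda>(s,t). f s t + g s t)"
    using assms unfolding split_beta' by (intro continuous_intros)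
  show ?thesis unfolding dint_cbox[OF c] dint_cbox[OF assms(1)] dint_cbox[OF assms(2)]
    using integral_add[OF integrable_continuous[OF assms(1)] integrable_continuous[OF assms(2)]]
    by (simp add: split_beta')
qed

lemma dint_diff:
  assumes "continuous_on (cbox (0,T0) (L,T1)) (\<lambda>(s,t). f s t)" "continuous_on (cbox (0,T0) (L,T1)) (\<lambda>(s,t). g s t)"
  shows "dint L T0 T1 (\<lambda>s t. f s t - g s t) = dint L T0 T1 f - dint L T0 T1 g"
proof -
  have c: "continuous_on (cbox (0,T0) (L,T1)) (\<lambda>(s,t). f s t - g s t)"
    using assms unfolding split_beta' by (intro continuous_intros)
  show ?thesis unfolding dint_cbox[OF c] dint_cbox[OF assms(1)] dint_cbox[OF assms(2)]
    using integral_diff[OF integrable_continuous[OF assms(1)] integrable_continuous[OF assms(2)]]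
    by (simp add: split_beta')
qed

lemma dint_neg: "dint L T0 T1 (\<lambda>s t. - f s t) = - dint L T0 T1 f"
  by (simp add: dint_def integral_neg)

lemma dint_scale: "dint L T0 T1 (\<lambda>s t. c * f s t) = c * dint L T0 T1 f"
  by (simp add: dint_def)

lemma deriv_lin:
  assumes A: "\<And>e s t. A e s t = F s t + e * H s t"
    and cF: "continuous_on (cbox (0,T0) (L,T1)) (\<lambda>(s,t). F s t)"
    and cH: "continuous_on (cbox (0,T0) (L,T1)) (\<lambda>(s,t). H s t)"
    and c: "(c has_real_derivative D) (at 0)"
  shows "((\<lambda>e. c e + dint L T0 T1 (A e)) has_real_derivative D + dint L T0 T1 H) (at 0)"
proof -
  have cH': "continuous_on (cbox (0,T0) (L,T1)) (\<lambda>(s,t). e * H s t)" for e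
    using cH unfolding split_beta' by (intro continuous_intros)
  have "dint L T0 T1 (A e) = dint L T0 T1 F + e * dint L T0 T1 H" for e
  proof -
    have "A e = (\<lambda>s t. F s t + e * H s t)" using A by (intro ext) auto
    then show ?thesis using dint_add[OF cF cH'[of e]] by (simp add: dint_scale)
  qed
  then have eq: "(\<lambda>e. c e + dint L T0 T1 (A e)) = (\<lambda>e. c e + (dint L T0 T1 F + e * dint L T0 T1 H))" by simp
  have "((\<lambda>e. c e + (dint L T0 T1 F + e * dint L T0 T1 H)) has_real_derivative D + (0 + 1 * dint L T0 T1 H)) (at 0)"
    by (intro DERIV_add c DERIV_const DERIV_cmult_right DERIV_ident)
  then show ?thesis unfolding eq by simp
qed

lemma hat_vee_skew:
  assumes "transpose A = - (A :: mat3)"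
  shows "hat (vee A) = A"
proof -
  have e: "A $ j $ i = - A $ i $ j" for i j
    using arg_cong[OF assms, of "\<lambda>M. M $ i $ j"] by (simp add: transpose_def)
  have d: "A $ i $ i = 0" for i using e[of i i] by simp
  show ?thesis
    by (simp add: vec_eq_iff forall_3 hat_comp vee_def d e[of 1 2] e[of 1 3] e[of 2 3])
qed

lemma skew_deriv:
  assumes orth: "\<And>\<tau>. transpose (f \<tau>) ** f \<tau> = (mat 1 :: mat3)"
    and d: "(f has_vector_derivative f') (at t)"
  shows "transpose (transpose (f t) ** f') = - (transpose (f t) ** f')"
proof -
  have d1: "((\<lambda>\<tau>. transpose (f \<tau>) ** f \<tau>) has_vector_derivative (transpose (f t) ** f' + transpose f' ** f t)) (at t)"
    by (rule vd_mm[OF vd_tr[OF d] d])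
  have d2: "((\<lambda>\<tau>. transpose (f \<tau>) ** f \<tau>) has_vector_derivative 0) (at t)"
    unfolding orth by simp
  have "transpose (f t) ** f' + transpose f' ** f t = 0"
    using vector_derivative_unique_at[OF d1 d2] .
  then have "transpose f' ** f t = - (transpose (f t) ** f')" by (simp add: eq_neg_iff_add_eq_0 add.commute)
  then show ?thesis by (simp add: matrix_transpose_mul)
qed

lemma C1_mv:
  assumes A: "C1_field A" and u: "C1_field (u :: vec3 field)"
  shows "C1_field (\<lambda>s t. (A s t :: mat3) *v u s t)"
    and "pt (\<lambda>s t. A s t *v u s t) = (\<lambda>s t. A s t *v pt u s t + pt A s t *v u s t)"
    and "ps (\<lambda>s t. A s t *v u s t) = (\<lambda>s t. A s t *v ps u s t + ps A s t *v u s t)"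
proof -
  have ht: "((\<lambda>\<tau>. A s \<tau> *v u s \<tau>) has_vector_derivative A s t *v pt u s t + pt A s t *v u s t) (at t)" for s t
    by (rule vd_mv[OF C1_pt_has[OF A] C1_pt_has[OF u]])
  have hs: "((\<lambda>\<sigma>. A \<sigma> t *v u \<sigma> t) has_vector_derivative A s t *v ps u s t + ps A s t *v u s t) (at s)" for s t
    by (rule vd_mv[OF C1_ps_has[OF A] C1_ps_has[OF u]])
  show pe: "pt (\<lambda>s t. A s t *v u s t) = (\<lambda>s t. A s t *v pt u s t + pt A s t *v u s t)"
    unfolding pt_def[of "\<lambda>s t. A s t *v u s t"] using ht by (intro ext vector_derivative_at)
  show se: "ps (\<lambda>s t. A s t *v u s t) = (\<lambda>s t. A s t *v ps u s t + ps A s t *v u s t)"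
    unfolding ps_def[of "\<lambda>s t. A s t *v u s t"] using hs by (intro ext vector_derivative_at)
  show "C1_field (\<lambda>s t. A s t *v u s t)"
    unfolding C1_field_def cont_field_def pe se split_beta'
  proof (intro conjI allI)
    note f = cfp[OF C1_cont(1)[OF A]] cfp[OF C1_cont(2)[OF A]] cfp[OF C1_cont(3)[OF A]]
      cfp[OF C1_cont(1)[OF u]] cfp[OF C1_cont(2)[OF u]] cfp[OF C1_cont(3)[OF u]]
    show "continuous_on UNIV (\<lambda>x. A (fst x) (snd x) *v u (fst x) (snd x))" by (intro continuous_intros f)
    show "continuous_on UNIV (\<lambda>x. A (fst x) (snd x) *v pt u (fst x) (snd x) + pt A (fst x) (snd x) *v u (fst x) (snd x))"
      by (intro continuous_intros f)
    show "continuous_on UNIV (\<lambda>x. A (fst x) (snd x) *v ps u (fst x) (snd x) + ps A (fst x) (snd x) *v u (fst x) (snd x))"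
      by (intro continuous_intros f)
    fix s t
    show "(\<lambda>\<tau>. A s \<tau> *v u s \<tau>) differentiable at t" using ht differentiableI_vector by blast
    show "(\<lambda>\<sigma>. A \<sigma> t *v u \<sigma> t) differentiable at s" using hs differentiableI_vector by blast
  qed
qed


declare transpose_matrix_vector[simp del]

lemma cont_cross[continuous_intros]: "continuous_on A f \<Longrightarrow> continuous_on A g \<Longrightarrow> continuous_on A (\<lambda>x. cross3 (f x) (g x))"
  by (rule bounded_bilinear.continuous_on[OF bounded_bilinear_cross])

lemma pt_lin: "C1_field x \<Longrightarrow> C1_field \<eta> \<Longrightarrow> pt (\<lambda>s t. x s t + e *\<^sub>R \<eta> s t) s t = pt x s t + e *\<^sub>R pt (\<eta> :: vec3 field) s t"
  unfolding pt_def[of "\<lambda>s t. x s t + e *\<^sub>R \<eta> s t"]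
  by (intro vector_derivative_at has_vector_derivative_add C1_pt_has
        bounded_linear.has_vector_derivative[OF bounded_linear_scaleR_right])

lemma ps_lin: "C1_field x \<Longrightarrow> C1_field \<eta> \<Longrightarrow> ps (\<lambda>s t. x s t + e *\<^sub>R \<eta> s t) s t = ps x s t + e *\<^sub>R ps (\<eta> :: vec3 field) s t"
  unfolding ps_def[of "\<lambda>s t. x s t + e *\<^sub>R \<eta> s t"]
  by (intro vector_derivative_at has_vector_derivative_add C1_ps_has
        bounded_linear.has_vector_derivative[OF bounded_linear_scaleR_right])

context
  fixes L T0 T1 :: real and l :: lagr and dw dg dW dG dr :: lagr_deriv and \<Lambda> :: "mat3 field"
    and x w g W G \<rho> \<pi> Pm R \<mu> M :: "vec3 field"
  assumes L: "0 < L" and T: "T0 < T1"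
    and rot: "\<forall>s t. rotation_matrix (\<Lambda> s t)"
    and CL: "C1_field \<Lambda>" and Cx: "C1_field x"
    and cw: "cont_field w" and cg: "cont_field g" and cW: "cont_field W" and cG: "cont_field G" and cr: "cont_field \<rho>"
    and Cp: "C1_field \<pi>" and CP: "C1_field Pm" and cR: "cont_field R" and Cm: "C1_field \<mu>" and CM: "C1_field M"
    and dui: "diff_under_int L T0 T1 l dw dg dW dG dr w g W G \<rho>"
    and cd: "\<forall>d \<in> {dw, dg, dW, dG, dr}. continuous_on (cbox (0, T0) (L, T1))
           (\<lambda>(s,t). d (\<lambda>s. w s t) (\<lambda>s. g s t) (\<lambda>s. W s t) (\<lambda>s. G s t) (\<lambda>s. \<rho> s t) s)"
begin

definition "ar d s t = d (\<lambda>s. w s t) (\<lambda>s. g s t) (\<lambda>s. W s t) (\<lambda>s. G s t) (\<lambda>s. \<rho> s t) s"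

lemma minv: "matrix_inv (\<Lambda> s t) = transpose (\<Lambda> s t)"
  by (rule orth_inv) (use rot in \<open>simp add: rotation_matrix_def\<close>)

lemma orthL: "transpose (\<Lambda> s t) ** \<Lambda> s t = mat 1" "\<Lambda> s t ** transpose (\<Lambda> s t) = mat 1"
  using rot by (simp_all add: rotation_matrix_def orthogonal_matrix_def)

lemmas fs = cfp[OF C1_cont(1)[OF CL]] cfp[OF C1_cont(2)[OF CL]] cfp[OF C1_cont(3)[OF CL]]
    cfp[OF C1_cont(1)[OF Cx]] cfp[OF C1_cont(2)[OF Cx]] cfp[OF C1_cont(3)[OF Cx]]
    cfp[OF cw] cfp[OF cg] cfp[OF cW] cfp[OF cG] cfp[OF cr]
    cfp[OF C1_cont(1)[OF Cp]] cfp[OF C1_cont(1)[OF CP]] cfp[OF cR] cfp[OF C1_cont(1)[OF Cm]] cfp[OF C1_cont(1)[OF CM]]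
    cfp[OF C1_cont(2)[OF Cp]] cfp[OF C1_cont(2)[OF CP]] cfp[OF C1_cont(2)[OF Cm]] cfp[OF C1_cont(2)[OF CM]]
    cfp[OF C1_cont(3)[OF Cp]] cfp[OF C1_cont(3)[OF CP]] cfp[OF C1_cont(3)[OF Cm]] cfp[OF C1_cont(3)[OF CM]]

definition "Ib s t = \<pi> s t \<bullet> (vee (transpose (\<Lambda> s t) ** pt \<Lambda> s t) - w s t)
       + Pm s t \<bullet> (vee (transpose (\<Lambda> s t) ** ps \<Lambda> s t) - W s t)
       + R s t \<bullet> (transpose (\<Lambda> s t) *v x s t - \<rho> s t)
       + \<mu> s t \<bullet> (transpose (\<Lambda> s t) *v pt x s t - g s t)
       + M s t \<bullet> (transpose (\<Lambda> s t) *v ps x s t - G s t)"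

lemma cIb: "continuous_on (cbox (0,T0) (L,T1)) (\<lambda>(s,t). Ib s t)"
  unfolding Ib_def split_beta' by (intro continuous_intros fs)

lemma var_gen:
  assumes "\<And>e s t. A e s t = Ib s t + e * H s t" "continuous_on (cbox (0,T0) (L,T1)) (\<lambda>(s,t). H s t)"
  shows "((\<lambda>e. lag_int T0 T1 l w g W G \<rho> + dint L T0 T1 (A e)) has_real_derivative dint L T0 T1 H) (at 0)"
  using deriv_lin[OF assms(1) cIb assms(2) DERIV_const] by simp

lemma var_gen2:
  assumes "\<And>e s t. A e s t = Ib s t + e * H s t" "continuous_on (cbox (0,T0) (L,T1)) (\<lambda>(s,t). H s t)"
    and "(c has_real_derivative D) (at 0)"
  shows "((\<lambda>e. c e + dint L T0 T1 (A e)) has_real_derivative D + dint L T0 T1 H) (at 0)"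
  using deriv_lin[OF assms(1) cIb assms(2) assms(3)] .

lemma cfe: "test_field L T0 T1 \<eta> \<Longrightarrow> continuous_on A (\<lambda>p. \<eta> (fst p) (snd p))"
  "test_field L T0 T1 \<eta> \<Longrightarrow> continuous_on A (\<lambda>p. pt \<eta> (fst p) (snd p))"
  "test_field L T0 T1 \<eta> \<Longrightarrow> continuous_on A (\<lambda>p. ps \<eta> (fst p) (snd p))"
  using cfp[OF C1_cont(1)[OF test_C1]] cfp[OF C1_cont(2)[OF test_C1]] cfp[OF C1_cont(3)[OF test_C1]] by blast+

lemma var_pi:
  assumes eta: "test_field L T0 T1 \<eta>"
  shows "((\<lambda>e. action L T0 T1 l \<Lambda> x w g W G \<rho> (\<lambda>s t. \<pi> s t + e *\<^sub>R \<eta> s t) Pm R \<mu> M) has_real_derivative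
    dint L T0 T1 (\<lambda>s t. (vee (transpose (\<Lambda> s t) ** pt \<Lambda> s t) - w s t) \<bullet> \<eta> s t)) (at 0)"
  unfolding action_def minv
  by (rule var_gen) (auto simp: Ib_def inner_add_left inner_commute split_beta' intro!: continuous_intros fs cfe[OF eta])

lemma var_Pm:
  assumes eta: "test_field L T0 T1 \<eta>"
  shows "((\<lambda>e. action L T0 T1 l \<Lambda> x w g W G \<rho> \<pi> (\<lambda>s t. Pm s t + e *\<^sub>R \<eta> s t) R \<mu> M) has_real_derivative
    dint L T0 T1 (\<lambda>s t. (vee (transpose (\<Lambda> s t) ** ps \<Lambda> s t) - W s t) \<bullet> \<eta> s t)) (at 0)"
  unfolding action_def minv
  by (rule var_gen) (auto simp: Ib_def inner_add_left inner_commute split_beta' intro!: continuous_intros fs cfe[OF eta])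

lemma var_R:
  assumes eta: "test_field L T0 T1 \<eta>"
  shows "((\<lambda>e. action L T0 T1 l \<Lambda> x w g W G \<rho> \<pi> Pm (\<lambda>s t. R s t + e *\<^sub>R \<eta> s t) \<mu> M) has_real_derivative
    dint L T0 T1 (\<lambda>s t. (transpose (\<Lambda> s t) *v x s t - \<rho> s t) \<bullet> \<eta> s t)) (at 0)"
  unfolding action_def minv
  by (rule var_gen) (auto simp: Ib_def inner_add_left inner_commute split_beta' intro!: continuous_intros fs cfe[OF eta])

lemma var_mu:
  assumes eta: "test_field L T0 T1 \<eta>"
  shows "((\<lambda>e. action L T0 T1 l \<Lambda> x w g W G \<rho> \<pi> Pm R (\<lambda>s t. \<mu> s t + e *\<^sub>R \<eta> s t) M) has_real_derivative
    dint L T0 T1 (\<lambda>s t. (transpose (\<Lambda> s t) *v pt x s t - g s t) \<bullet> \<eta> s t)) (at 0)"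
  unfolding action_def minv
  by (rule var_gen) (auto simp: Ib_def inner_add_left inner_commute split_beta' intro!: continuous_intros fs cfe[OF eta])

lemma var_M:
  assumes eta: "test_field L T0 T1 \<eta>"
  shows "((\<lambda>e. action L T0 T1 l \<Lambda> x w g W G \<rho> \<pi> Pm R \<mu> (\<lambda>s t. M s t + e *\<^sub>R \<eta> s t)) has_real_derivative
    dint L T0 T1 (\<lambda>s t. (transpose (\<Lambda> s t) *v ps x s t - G s t) \<bullet> \<eta> s t)) (at 0)"
  unfolding action_def minv
  by (rule var_gen) (auto simp: Ib_def inner_add_left inner_commute split_beta' intro!: continuous_intros fs cfe[OF eta])

lemma car: "d \<in> {dw, dg, dW, dG, dr} \<Longrightarrow> continuous_on (cbox (0,T0) (L,T1)) (\<lambda>(s,t). ar d s t)"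
  using cd unfolding ar_def by blast

lemma dui': "test_field L T0 T1 \<eta> \<Longrightarrow>
      ((\<lambda>\<epsilon>. lag_int T0 T1 l (\<lambda>s t. w s t + \<epsilon> *\<^sub>R \<eta> s t) g W G \<rho>) has_real_derivative dint L T0 T1 (\<lambda>s t. ar dw s t \<bullet> \<eta> s t)) (at 0) \<and>
      ((\<lambda>\<epsilon>. lag_int T0 T1 l w (\<lambda>s t. g s t + \<epsilon> *\<^sub>R \<eta> s t) W G \<rho>) has_real_derivative dint L T0 T1 (\<lambda>s t. ar dg s t \<bullet> \<eta> s t)) (at 0) \<and>
      ((\<lambda>\<epsilon>. lag_int T0 T1 l w g (\<lambda>s t. W s t + \<epsilon> *\<^sub>R \<eta> s t) G \<rho>) has_real_derivative dint L T0 T1 (\<lambda>s t. ar dW s t \<bullet> \<eta> s t)) (at 0) \<and>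
      ((\<lambda>\<epsilon>. lag_int T0 T1 l w g W (\<lambda>s t. G s t + \<epsilon> *\<^sub>R \<eta> s t) \<rho>) has_real_derivative dint L T0 T1 (\<lambda>s t. ar dG s t \<bullet> \<eta> s t)) (at 0) \<and>
      ((\<lambda>\<epsilon>. lag_int T0 T1 l w g W G (\<lambda>s t. \<rho> s t + \<epsilon> *\<^sub>R \<eta> s t)) has_real_derivative dint L T0 T1 (\<lambda>s t. ar dr s t \<bullet> \<eta> s t)) (at 0)"
  using dui unfolding diff_under_int_def Let_def ar_def by blast

lemma combine:
  assumes "d \<in> {dw, dg, dW, dG, dr}" and eta: "test_field L T0 T1 \<eta>" and cp: "cont_field p"
  shows "dint L T0 T1 (\<lambda>s t. ar d s t \<bullet> \<eta> s t) + dint L T0 T1 (\<lambda>s t. - (p s t \<bullet> \<eta> s t))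
       = dint L T0 T1 (\<lambda>s t. (ar d s t - p s t) \<bullet> \<eta> s t)"
proof -
  have c1: "continuous_on (cbox (0,T0) (L,T1)) (\<lambda>(s,t). ar d s t \<bullet> \<eta> s t)"
    using car[OF assms(1)] cfe(1)[OF eta] unfolding split_beta' by (intro continuous_intros) auto
  have c2: "continuous_on (cbox (0,T0) (L,T1)) (\<lambda>(s,t). p s t \<bullet> \<eta> s t)"
    using cfp[OF cp] cfe(1)[OF eta] unfolding split_beta' by (intro continuous_intros) auto
  show ?thesis using dint_diff[OF c1 c2] by (simp add: dint_neg inner_diff_left)
qed

lemma var_w:
  assumes eta: "test_field L T0 T1 \<eta>"
  shows "((\<lambda>e. action L T0 T1 l \<Lambda> x (\<lambda>s t. w s t + e *\<^sub>R \<eta> s t) g W G \<rho> \<pi> Pm R \<mu> M) has_real_derivative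
    dint L T0 T1 (\<lambda>s t. (ar dw s t - \<pi> s t) \<bullet> \<eta> s t)) (at 0)"
proof -
  have "((\<lambda>e. action L T0 T1 l \<Lambda> x (\<lambda>s t. w s t + e *\<^sub>R \<eta> s t) g W G \<rho> \<pi> Pm R \<mu> M) has_real_derivative
    dint L T0 T1 (\<lambda>s t. ar dw s t \<bullet> \<eta> s t) + dint L T0 T1 (\<lambda>s t. - (\<pi> s t \<bullet> \<eta> s t))) (at 0)"
    unfolding action_def minv
    by (rule var_gen2[OF _ _ conjunct1[OF dui'[OF eta]]])
       (auto simp: Ib_def inner_diff_right inner_commute split_beta' algebra_simps intro!: continuous_intros fs cfe[OF eta])
  then show ?thesis using combine[of dw, OF _ eta C1_cont(1)[OF Cp]] by simp
qed

lemma var_g: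
  assumes eta: "test_field L T0 T1 \<eta>"
  shows "((\<lambda>e. action L T0 T1 l \<Lambda> x w (\<lambda>s t. g s t + e *\<^sub>R \<eta> s t) W G \<rho> \<pi> Pm R \<mu> M) has_real_derivative
    dint L T0 T1 (\<lambda>s t. (ar dg s t - \<mu> s t) \<bullet> \<eta> s t)) (at 0)"
proof -
  have "((\<lambda>e. action L T0 T1 l \<Lambda> x w (\<lambda>s t. g s t + e *\<^sub>R \<eta> s t) W G \<rho> \<pi> Pm R \<mu> M) has_real_derivative
    dint L T0 T1 (\<lambda>s t. ar dg s t \<bullet> \<eta> s t) + dint L T0 T1 (\<lambda>s t. - (\<mu> s t \<bullet> \<eta> s t))) (at 0)"
    unfolding action_def minv
    by (rule var_gen2[OF _ _ conjunct1[OF conjunct2[OF dui'[OF eta]]]])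
       (auto simp: Ib_def inner_diff_right inner_commute split_beta' algebra_simps intro!: continuous_intros fs cfe[OF eta])
  then show ?thesis using combine[of dg, OF _ eta C1_cont(1)[OF Cm]] by simp
qed

lemma var_W:
  assumes eta: "test_field L T0 T1 \<eta>"
  shows "((\<lambda>e. action L T0 T1 l \<Lambda> x w g (\<lambda>s t. W s t + e *\<^sub>R \<eta> s t) G \<rho> \<pi> Pm R \<mu> M) has_real_derivative
    dint L T0 T1 (\<lambda>s t. (ar dW s t - Pm s t) \<bullet> \<eta> s t)) (at 0)"
proof -
  have "((\<lambda>e. action L T0 T1 l \<Lambda> x w g (\<lambda>s t. W s t + e *\<^sub>R \<eta> s t) G \<rho> \<pi> Pm R \<mu> M) has_real_derivative
    dint L T0 T1 (\<lambda>s t. ar dW s t \<bullet> \<eta> s t) + dint L T0 T1 (\<lambda>s t. - (Pm s t \<bullet> \<eta> s t))) (at 0)"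
    unfolding action_def minv
    by (rule var_gen2[OF _ _ conjunct1[OF conjunct2[OF conjunct2[OF dui'[OF eta]]]]])
       (auto simp: Ib_def inner_diff_right inner_commute split_beta' algebra_simps intro!: continuous_intros fs cfe[OF eta])
  then show ?thesis using combine[of dW, OF _ eta C1_cont(1)[OF CP]] by simp
qed

lemma var_G:
  assumes eta: "test_field L T0 T1 \<eta>"
  shows "((\<lambda>e. action L T0 T1 l \<Lambda> x w g W (\<lambda>s t. G s t + e *\<^sub>R \<eta> s t) \<rho> \<pi> Pm R \<mu> M) has_real_derivative
    dint L T0 T1 (\<lambda>s t. (ar dG s t - M s t) \<bullet> \<eta> s t)) (at 0)"
proof -
  have "((\<lambda>e. action L T0 T1 l \<Lambda> x w g W (\<lambda>s t. G s t + e *\<^sub>R \<eta> s t) \<rho> \<pi> Pm R \<mu> M) has_real_derivative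
    dint L T0 T1 (\<lambda>s t. ar dG s t \<bullet> \<eta> s t) + dint L T0 T1 (\<lambda>s t. - (M s t \<bullet> \<eta> s t))) (at 0)"
    unfolding action_def minv
    by (rule var_gen2[OF _ _ conjunct1[OF conjunct2[OF conjunct2[OF conjunct2[OF dui'[OF eta]]]]]])
       (auto simp: Ib_def inner_diff_right inner_commute split_beta' algebra_simps intro!: continuous_intros fs cfe[OF eta])
  then show ?thesis using combine[of dG, OF _ eta C1_cont(1)[OF CM]] by simp
qed

lemma var_rho:
  assumes eta: "test_field L T0 T1 \<eta>"
  shows "((\<lambda>e. action L T0 T1 l \<Lambda> x w g W G (\<lambda>s t. \<rho> s t + e *\<^sub>R \<eta> s t) \<pi> Pm R \<mu> M) has_real_derivative
    dint L T0 T1 (\<lambda>s t. (ar dr s t - R s t) \<bullet> \<eta> s t)) (at 0)"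
proof -
  have "((\<lambda>e. action L T0 T1 l \<Lambda> x w g W G (\<lambda>s t. \<rho> s t + e *\<^sub>R \<eta> s t) \<pi> Pm R \<mu> M) has_real_derivative
    dint L T0 T1 (\<lambda>s t. ar dr s t \<bullet> \<eta> s t) + dint L T0 T1 (\<lambda>s t. - (R s t \<bullet> \<eta> s t))) (at 0)"
    unfolding action_def minv
    by (rule var_gen2[OF _ _ conjunct2[OF conjunct2[OF conjunct2[OF conjunct2[OF dui'[OF eta]]]]]])
       (auto simp: Ib_def inner_diff_right inner_commute split_beta' algebra_simps intro!: continuous_intros fs cfe[OF eta])
  then show ?thesis using combine[of dr, OF _ eta cR] by simp
qed

lemma var_x:
  assumes eta: "test_field L T0 T1 \<eta>"
  shows "((\<lambda>e. action L T0 T1 l \<Lambda> (\<lambda>s t. x s t + e *\<^sub>R \<eta> s t) w g W G \<rho> \<pi> Pm R \<mu> M) has_real_derivative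
    dint L T0 T1 (\<lambda>s t. R s t \<bullet> (transpose (\<Lambda> s t) *v \<eta> s t) + \<mu> s t \<bullet> (transpose (\<Lambda> s t) *v pt \<eta> s t)
       + M s t \<bullet> (transpose (\<Lambda> s t) *v ps \<eta> s t))) (at 0)"
  unfolding action_def minv pt_lin[OF Cx test_C1[OF eta]] ps_lin[OF Cx test_C1[OF eta]]
  by (rule var_gen)
     (auto simp: Ib_def inner_diff_right inner_add_right matrix_vector_right_distrib scaleR_matrix_vector_assoc[symmetric]
        split_beta' algebra_simps intro!: continuous_intros fs cfe[OF eta])


lemma inner_tr: "(a::vec3) \<bullet> (transpose (A::mat3) *v b) = (A *v a) \<bullet> b"
  by (simp add: inner_vec_def sum_3 matrix_vector_mult_def transpose_def algebra_simps)

definition "Kx s t = \<Lambda> s t *v R s t - (\<Lambda> s t *v pt \<mu> s t + pt \<Lambda> s t *v \<mu> s t) - (\<Lambda> s t *v ps M s t + ps \<Lambda> s t *v M s t)"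

lemma cKx: "continuous_on (cbox (0,T0) (L,T1)) (\<lambda>(s,t). Kx s t)"
  unfolding Kx_def split_beta' by (intro continuous_intros fs)

lemma var_x2:
  assumes eta: "test_field L T0 T1 \<eta>"
  shows "((\<lambda>e. action L T0 T1 l \<Lambda> (\<lambda>s t. x s t + e *\<^sub>R \<eta> s t) w g W G \<rho> \<pi> Pm R \<mu> M) has_real_derivative
    dint L T0 T1 (\<lambda>s t. Kx s t \<bullet> \<eta> s t)) (at 0)"
proof -
  note ce = cfe[OF eta]
  let ?P = "cbox (0,T0) (L,T1)"
  have C1a: "C1_field (\<lambda>s t. \<Lambda> s t *v \<mu> s t)" "C1_field (\<lambda>s t. \<Lambda> s t *v M s t)"
    using C1_mv(1)[OF CL Cm] C1_mv(1)[OF CL CM] .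
  have k1: "continuous_on ?P (\<lambda>(s,t). (\<Lambda> s t *v R s t) \<bullet> \<eta> s t)"
    unfolding split_beta' by (intro continuous_intros fs ce)
  have k2: "continuous_on ?P (\<lambda>(s,t). (\<Lambda> s t *v \<mu> s t) \<bullet> pt \<eta> s t)"
    unfolding split_beta' by (intro continuous_intros fs ce)
  have k3: "continuous_on ?P (\<lambda>(s,t). (\<Lambda> s t *v M s t) \<bullet> ps \<eta> s t)"
    unfolding split_beta' by (intro continuous_intros fs ce)
  have k4: "continuous_on ?P (\<lambda>(s,t). pt (\<lambda>s t. \<Lambda> s t *v \<mu> s t) s t \<bullet> \<eta> s t)"
    unfolding split_beta' C1_mv(2)[OF CL Cm] by (intro continuous_intros fs ce)
  have k5: "continuous_on ?P (\<lambda>(s,t). ps (\<lambda>s t. \<Lambda> s t *v M s t) s t \<bullet> \<eta> s t)"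
    unfolding split_beta' C1_mv(3)[OF CL CM] by (intro continuous_intros fs ce)
  have k12: "continuous_on ?P (\<lambda>(s,t). (\<Lambda> s t *v R s t) \<bullet> \<eta> s t + (\<Lambda> s t *v \<mu> s t) \<bullet> pt \<eta> s t)"
    unfolding split_beta' by (intro continuous_intros fs ce)
  have k14: "continuous_on ?P (\<lambda>(s,t). (\<Lambda> s t *v R s t) \<bullet> \<eta> s t - pt (\<lambda>s t. \<Lambda> s t *v \<mu> s t) s t \<bullet> \<eta> s t)"
    unfolding split_beta' C1_mv(2)[OF CL Cm] by (intro continuous_intros fs ce)
  have "dint L T0 T1 (\<lambda>s t. R s t \<bullet> (transpose (\<Lambda> s t) *v \<eta> s t) + \<mu> s t \<bullet> (transpose (\<Lambda> s t) *v pt \<eta> s t)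
       + M s t \<bullet> (transpose (\<Lambda> s t) *v ps \<eta> s t))
    = dint L T0 T1 (\<lambda>s t. (\<Lambda> s t *v R s t) \<bullet> \<eta> s t + (\<Lambda> s t *v \<mu> s t) \<bullet> pt \<eta> s t
       + (\<Lambda> s t *v M s t) \<bullet> ps \<eta> s t)"
    by (simp add: inner_tr)
  also have "\<dots> = dint L T0 T1 (\<lambda>s t. (\<Lambda> s t *v R s t) \<bullet> \<eta> s t) + dint L T0 T1 (\<lambda>s t. (\<Lambda> s t *v \<mu> s t) \<bullet> pt \<eta> s t)
       + dint L T0 T1 (\<lambda>s t. (\<Lambda> s t *v M s t) \<bullet> ps \<eta> s t)"
    using dint_add[OF k12 k3] dint_add[OF k1 k2] by simp
  also have "\<dots> = dint L T0 T1 (\<lambda>s t. (\<Lambda> s t *v R s t) \<bullet> \<eta> s t) - dint L T0 T1 (\<lambda>s t. pt (\<lambda>s t. \<Lambda> s t *v \<mu> s t) s t \<bullet> \<eta> s t)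
       - dint L T0 T1 (\<lambda>s t. ps (\<lambda>s t. \<Lambda> s t *v M s t) s t \<bullet> \<eta> s t)"
    using ibp_t[OF C1a(1) eta] ibp_s[OF C1a(2) eta] L T by simp
  also have "\<dots> = dint L T0 T1 (\<lambda>s t. Kx s t \<bullet> \<eta> s t)"
    using dint_diff[OF k14 k5] dint_diff[OF k1 k4]
    by (simp add: Kx_def C1_mv(2)[OF CL Cm] C1_mv(3)[OF CL CM] inner_diff_left)
  finally show ?thesis using var_x[OF eta] by simp
qed

lemma trip: "p' \<bullet> cross3 w' a' + p' \<bullet> u1 + P' \<bullet> cross3 W' a' + P' \<bullet> u2 - R' \<bullet> cross3 a' r' - m' \<bullet> cross3 a' g' - M' \<bullet> cross3 a' G'
  = (- (cross3 w' p' + cross3 W' P' + cross3 g' m' + cross3 G' M' + cross3 r' R')) \<bullet> a' + p' \<bullet> u1 + P' \<bullet> u2"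
  by (simp add: cross3_def inner_vec_def sum_3 algebra_simps)

definition "KL s t = - (pt \<pi> s t + cross3 (w s t) (\<pi> s t) + ps Pm s t + cross3 (W s t) (Pm s t)
   + cross3 (g s t) (\<mu> s t) + cross3 (G s t) (M s t) + cross3 (\<rho> s t) (R s t))"

lemma var_Lam2:
  assumes eta: "test_field L T0 T1 \<eta>"
    and cons: "\<And>s t. s \<in> {0..L} \<Longrightarrow> t \<in> {T0..T1} \<Longrightarrow> transpose (\<Lambda> s t) ** pt \<Lambda> s t = hat (w s t)
       \<and> transpose (\<Lambda> s t) ** ps \<Lambda> s t = hat (W s t) \<and> transpose (\<Lambda> s t) *v x s t = \<rho> s t
       \<and> transpose (\<Lambda> s t) *v pt x s t = g s t \<and> transpose (\<Lambda> s t) *v ps x s t = G s t"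
  shows "((\<lambda>e. action L T0 T1 l (\<lambda>s t. \<Lambda> s t ** so3_exp (e *\<^sub>R \<eta> s t)) x w g W G \<rho> \<pi> Pm R \<mu> M) has_real_derivative
    dint L T0 T1 (\<lambda>s t. KL s t \<bullet> \<eta> s t)) (at 0)"
proof -
  note ce = cfe[OF eta]
  let ?P = "cbox (0,T0) (L,T1)"
  let ?A = "\<lambda>s t. (- (cross3 (w s t) (\<pi> s t) + cross3 (W s t) (Pm s t) + cross3 (g s t) (\<mu> s t)
      + cross3 (G s t) (M s t) + cross3 (\<rho> s t) (R s t))) \<bullet> \<eta> s t"
  have d: "((\<lambda>e. action L T0 T1 l (\<lambda>s t. \<Lambda> s t ** so3_exp (e *\<^sub>R \<eta> s t)) x w g W G \<rho> \<pi> Pm R \<mu> M) has_real_derivative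
     dint L T0 T1 (\<lambda>s t. dIL 0 (\<eta> s t) (pt \<eta> s t) (ps \<eta> s t) (\<Lambda> s t) (pt \<Lambda> s t) (ps \<Lambda> s t)
        (x s t) (pt x s t) (ps x s t) (\<pi> s t) (Pm s t) (R s t) (\<mu> s t) (M s t))) (at 0)"
    by (rule action_Lam_deriv[OF rot CL Cx cw cg cW cG cr C1_cont(1)[OF Cp] C1_cont(1)[OF CP] cR
          C1_cont(1)[OF Cm] C1_cont(1)[OF CM] test_C1[OF eta]])
  have "dint L T0 T1 (\<lambda>s t. dIL 0 (\<eta> s t) (pt \<eta> s t) (ps \<eta> s t) (\<Lambda> s t) (pt \<Lambda> s t) (ps \<Lambda> s t)
        (x s t) (pt x s t) (ps x s t) (\<pi> s t) (Pm s t) (R s t) (\<mu> s t) (M s t))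
    = dint L T0 T1 (\<lambda>s t. ?A s t + \<pi> s t \<bullet> pt \<eta> s t + Pm s t \<bullet> ps \<eta> s t)"
  proof (rule dint_cong)
    fix s t assume st: "s \<in> {0..L}" "t \<in> {T0..T1}"
    note c = cons[OF st]
    show "dIL 0 (\<eta> s t) (pt \<eta> s t) (ps \<eta> s t) (\<Lambda> s t) (pt \<Lambda> s t) (ps \<Lambda> s t)
        (x s t) (pt x s t) (ps x s t) (\<pi> s t) (Pm s t) (R s t) (\<mu> s t) (M s t) = ?A s t + \<pi> s t \<bullet> pt \<eta> s t + Pm s t \<bullet> ps \<eta> s t"
      unfolding dIL0[OF orthL(1) conjunct1[OF c] conjunct1[OF conjunct2[OF c]] conjunct1[OF conjunct2[OF conjunct2[OF c]]]
         conjunct1[OF conjunct2[OF conjunct2[OF conjunct2[OF c]]]] conjunct2[OF conjunct2[OF conjunct2[OF conjunct2[OF c]]]]]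
      by (rule trip)
  qed
  also have "\<dots> = dint L T0 T1 ?A + dint L T0 T1 (\<lambda>s t. \<pi> s t \<bullet> pt \<eta> s t) + dint L T0 T1 (\<lambda>s t. Pm s t \<bullet> ps \<eta> s t)"
  proof -
    have k1: "continuous_on ?P (\<lambda>(s,t). ?A s t)" unfolding split_beta' by (intro continuous_intros fs ce)
    have k2: "continuous_on ?P (\<lambda>(s,t). \<pi> s t \<bullet> pt \<eta> s t)" unfolding split_beta' by (intro continuous_intros fs ce)
    have k3: "continuous_on ?P (\<lambda>(s,t). Pm s t \<bullet> ps \<eta> s t)" unfolding split_beta' by (intro continuous_intros fs ce)
    have k12: "continuous_on ?P (\<lambda>(s,t). ?A s t + \<pi> s t \<bullet> pt \<eta> s t)" unfolding split_beta' by (intro continuous_intros fs ce)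
    show ?thesis using dint_add[OF k12 k3] dint_add[OF k1 k2] by simp
  qed
  also have "\<dots> = dint L T0 T1 ?A - dint L T0 T1 (\<lambda>s t. pt \<pi> s t \<bullet> \<eta> s t) - dint L T0 T1 (\<lambda>s t. ps Pm s t \<bullet> \<eta> s t)"
    using ibp_t[OF Cp eta] ibp_s[OF CP eta] L T by simp
  also have "\<dots> = dint L T0 T1 (\<lambda>s t. KL s t \<bullet> \<eta> s t)"
  proof -
    have k1: "continuous_on ?P (\<lambda>(s,t). ?A s t)" unfolding split_beta' by (intro continuous_intros fs ce)
    have k2: "continuous_on ?P (\<lambda>(s,t). pt \<pi> s t \<bullet> \<eta> s t)" unfolding split_beta' by (intro continuous_intros fs ce)
    have k3: "continuous_on ?P (\<lambda>(s,t). ps Pm s t \<bullet> \<eta> s t)" unfolding split_beta' by (intro continuous_intros fs ce)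
    have k12: "continuous_on ?P (\<lambda>(s,t). ?A s t - pt \<pi> s t \<bullet> \<eta> s t)" unfolding split_beta' by (intro continuous_intros fs ce)
    have "dint L T0 T1 (\<lambda>s t. KL s t \<bullet> \<eta> s t) = dint L T0 T1 (\<lambda>s t. ?A s t - pt \<pi> s t \<bullet> \<eta> s t - ps Pm s t \<bullet> \<eta> s t)"
      by (rule dint_cong) (simp add: KL_def inner_add_left inner_diff_left algebra_simps)
    then show ?thesis using dint_diff[OF k12 k3] dint_diff[OF k1 k2] by simp
  qed
  finally show ?thesis using d by simp
qed

lemma zero_of:
  fixes K :: "vec3 field" and F :: "vec3 field \<Rightarrow> real \<Rightarrow> real"
  assumes cK: "continuous_on (cbox (0,T0) (L,T1)) (\<lambda>(s,t). K s t)"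
    and dd: "\<And>\<eta>. test_field L T0 T1 \<eta> \<Longrightarrow> (F \<eta> has_real_derivative dint L T0 T1 (\<lambda>s t. K s t \<bullet> \<eta> s t)) (at 0)"
    and z: "\<And>\<eta>. test_field L T0 T1 \<eta> \<Longrightarrow> (F \<eta> has_real_derivative 0) (at 0)"
  shows "\<forall>s\<in>{0..L}. \<forall>t\<in>{T0..T1}. K s t = 0"
  by (rule FL[OF L T cK]) (use DERIV_unique[OF dd z] in blast)

lemma skewL: "transpose (transpose (\<Lambda> s t) ** pt \<Lambda> s t) = - (transpose (\<Lambda> s t) ** pt \<Lambda> s t)"
  "transpose (transpose (\<Lambda> s t) ** ps \<Lambda> s t) = - (transpose (\<Lambda> s t) ** ps \<Lambda> s t)"
proof -
  show "transpose (transpose (\<Lambda> s t) ** pt \<Lambda> s t) = - (transpose (\<Lambda> s t) ** pt \<Lambda> s t)"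
    by (rule skew_deriv[of "\<lambda>\<tau>. \<Lambda> s \<tau>", OF orthL(1) C1_pt_has[OF CL]])
  show "transpose (transpose (\<Lambda> s t) ** ps \<Lambda> s t) = - (transpose (\<Lambda> s t) ** ps \<Lambda> s t)"
    by (rule skew_deriv[of "\<lambda>\<sigma>. \<Lambda> \<sigma> t", OF orthL(1) C1_ps_has[OF CL]])
qed

lemma Kx_eq:
  assumes "transpose (\<Lambda> s t) ** pt \<Lambda> s t = hat (w s t)" "transpose (\<Lambda> s t) ** ps \<Lambda> s t = hat (W s t)"
  shows "Kx s t = \<Lambda> s t *v (R s t - pt \<mu> s t - cross3 (w s t) (\<mu> s t) - ps M s t - cross3 (W s t) (M s t))"
proof -
  have a: "pt \<Lambda> s t = \<Lambda> s t ** hat (w s t)"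
    using arg_cong[OF assms(1), of "\<lambda>X. \<Lambda> s t ** X"] by (simp add: matrix_mul_assoc orthL(2))
  have b: "ps \<Lambda> s t = \<Lambda> s t ** hat (W s t)"
    using arg_cong[OF assms(2), of "\<lambda>X. \<Lambda> s t ** X"] by (simp add: matrix_mul_assoc orthL(2))
  show ?thesis
    by (simp add: Kx_def a b matrix_vector_mul_assoc[symmetric] hat_apply matrix_vector_right_distrib
        matrix_vector_mult_diff_distrib algebra_simps)
qed

lemma inv_cancel: "transpose (\<Lambda> s t) *v (\<Lambda> s t *v v) = v"
  by (simp add: matrix_vector_mul_assoc orthL(1))

abbreviation "CONCL \<equiv> (\<forall>s \<in> {0..L}. \<forall>t \<in> {T0..T1}.
      (let args = (\<lambda>d. d (\<lambda>s. w s t) (\<lambda>s. g s t) (\<lambda>s. W s t) (\<lambda>s. G s t) (\<lambda>s. \<rho> s t) s) in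
        args dr - R s t = 0 \<and>
        args dw - \<pi> s t = 0 \<and>
        args dW - Pm s t = 0 \<and>
        args dg - \<mu> s t = 0 \<and>
        args dG - M s t = 0 \<and>
        pt \<pi> s t + cross3 (w s t) (\<pi> s t) + ps Pm s t + cross3 (W s t) (Pm s t)
          + cross3 (g s t) (\<mu> s t) + cross3 (G s t) (M s t) + cross3 (\<rho> s t) (R s t) = 0 \<and>
        pt \<mu> s t + cross3 (w s t) (\<mu> s t) + ps M s t + cross3 (W s t) (M s t) - R s t = 0 \<and>
        matrix_inv (\<Lambda> s t) ** pt \<Lambda> s t = hat (w s t) \<and>
        matrix_inv (\<Lambda> s t) ** ps \<Lambda> s t = hat (W s t) \<and>
        matrix_inv (\<Lambda> s t) *v x s t = \<rho> s t \<and>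
        matrix_inv (\<Lambda> s t) *v pt x s t = g s t \<and>
        matrix_inv (\<Lambda> s t) *v ps x s t = G s t))"

lemma fwd:
  assumes stat: "stationary L T0 T1 l \<Lambda> x w g W G \<rho> \<pi> Pm R \<mu> M"
  shows CONCL
proof -
  let ?P = "cbox (0,T0) (L,T1)"
  note S = stat[unfolded stationary_def Let_def, rule_format]
  have z1: "\<forall>s\<in>{0..L}. \<forall>t\<in>{T0..T1}. vee (transpose (\<Lambda> s t) ** pt \<Lambda> s t) - w s t = 0"
    by (rule zero_of[OF _ var_pi]) (auto simp: split_beta' intro!: continuous_intros fs dest: S)
  have z2: "\<forall>s\<in>{0..L}. \<forall>t\<in>{T0..T1}. vee (transpose (\<Lambda> s t) ** ps \<Lambda> s t) - W s t = 0"
    by (rule zero_of[OF _ var_Pm]) (auto simp: split_beta' intro!: continuous_intros fs dest: S)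
  have z3: "\<forall>s\<in>{0..L}. \<forall>t\<in>{T0..T1}. transpose (\<Lambda> s t) *v x s t - \<rho> s t = 0"
    by (rule zero_of[OF _ var_R]) (auto simp: split_beta' intro!: continuous_intros fs dest: S)
  have z4: "\<forall>s\<in>{0..L}. \<forall>t\<in>{T0..T1}. transpose (\<Lambda> s t) *v pt x s t - g s t = 0"
    by (rule zero_of[OF _ var_mu]) (auto simp: split_beta' intro!: continuous_intros fs dest: S)
  have z5: "\<forall>s\<in>{0..L}. \<forall>t\<in>{T0..T1}. transpose (\<Lambda> s t) *v ps x s t - G s t = 0"
    by (rule zero_of[OF _ var_M]) (auto simp: split_beta' intro!: continuous_intros fs dest: S)
  have z6: "\<forall>s\<in>{0..L}. \<forall>t\<in>{T0..T1}. ar dw s t - \<pi> s t = 0"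
    by (rule zero_of[OF _ var_w]) (auto simp: split_beta' intro!: continuous_intros fs car[of dw, unfolded split_beta'] dest: S)
  have z7: "\<forall>s\<in>{0..L}. \<forall>t\<in>{T0..T1}. ar dg s t - \<mu> s t = 0"
    by (rule zero_of[OF _ var_g]) (auto simp: split_beta' intro!: continuous_intros fs car[of dg, unfolded split_beta'] dest: S)
  have z8: "\<forall>s\<in>{0..L}. \<forall>t\<in>{T0..T1}. ar dW s t - Pm s t = 0"
    by (rule zero_of[OF _ var_W]) (auto simp: split_beta' intro!: continuous_intros fs car[of dW, unfolded split_beta'] dest: S)
  have z9: "\<forall>s\<in>{0..L}. \<forall>t\<in>{T0..T1}. ar dG s t - M s t = 0"
    by (rule zero_of[OF _ var_G]) (auto simp: split_beta' intro!: continuous_intros fs car[of dG, unfolded split_beta'] dest: S)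
  have z10: "\<forall>s\<in>{0..L}. \<forall>t\<in>{T0..T1}. ar dr s t - R s t = 0"
    by (rule zero_of[OF _ var_rho]) (auto simp: split_beta' intro!: continuous_intros fs car[of dr, unfolded split_beta'] dest: S)
  have z11: "\<forall>s\<in>{0..L}. \<forall>t\<in>{T0..T1}. Kx s t = 0"
    by (rule zero_of[OF cKx var_x2]) (auto dest: S)
  have cons: "transpose (\<Lambda> s t) ** pt \<Lambda> s t = hat (w s t)
       \<and> transpose (\<Lambda> s t) ** ps \<Lambda> s t = hat (W s t) \<and> transpose (\<Lambda> s t) *v x s t = \<rho> s t
       \<and> transpose (\<Lambda> s t) *v pt x s t = g s t \<and> transpose (\<Lambda> s t) *v ps x s t = G s t"
    if st: "s \<in> {0..L}" "t \<in> {T0..T1}" for s t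
  proof (intro conjI)
    have "vee (transpose (\<Lambda> s t) ** pt \<Lambda> s t) = w s t" using z1 st by simp
    then show "transpose (\<Lambda> s t) ** pt \<Lambda> s t = hat (w s t)" using hat_vee_skew[OF skewL(1)] by metis
    have "vee (transpose (\<Lambda> s t) ** ps \<Lambda> s t) = W s t" using z2 st by simp
    then show "transpose (\<Lambda> s t) ** ps \<Lambda> s t = hat (W s t)" using hat_vee_skew[OF skewL(2)] by metis
  qed (use z3 z4 z5 st in auto)
  have z12: "\<forall>s\<in>{0..L}. \<forall>t\<in>{T0..T1}. KL s t = 0"
    by (rule zero_of[OF _ var_Lam2[OF _ cons]]) (auto simp: KL_def split_beta' intro!: continuous_intros fs dest: S)
  show ?thesis
  proof (intro ballI)
    fix s t assume st: "s \<in> {0..L}" "t \<in> {T0..T1}"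
    note c = cons[OF st]
    have q: "R s t - pt \<mu> s t - cross3 (w s t) (\<mu> s t) - ps M s t - cross3 (W s t) (M s t) = 0"
      using arg_cong[OF z11[rule_format, OF st, unfolded Kx_eq[OF conjunct1[OF c] conjunct1[OF conjunct2[OF c]]]],
          of "\<lambda>v. transpose (\<Lambda> s t) *v v"] by (simp add: inv_cancel)
    have e1: "pt \<pi> s t + cross3 (w s t) (\<pi> s t) + ps Pm s t + cross3 (W s t) (Pm s t)
          + cross3 (g s t) (\<mu> s t) + cross3 (G s t) (M s t) + cross3 (\<rho> s t) (R s t) = 0"
      using z12[rule_format, OF st] unfolding KL_def by (simp only: neg_equal_0_iff_equal)
    have "pt \<mu> s t + cross3 (w s t) (\<mu> s t) + ps M s t + cross3 (W s t) (M s t) - R s t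
       = - (R s t - pt \<mu> s t - cross3 (w s t) (\<mu> s t) - ps M s t - cross3 (W s t) (M s t))"
      by (simp add: algebra_simps)
    then have e2: "pt \<mu> s t + cross3 (w s t) (\<mu> s t) + ps M s t + cross3 (W s t) (M s t) - R s t = 0"
      using q by simp
    show "let args = (\<lambda>d. d (\<lambda>s. w s t) (\<lambda>s. g s t) (\<lambda>s. W s t) (\<lambda>s. G s t) (\<lambda>s. \<rho> s t) s) in
        args dr - R s t = 0 \<and>
        args dw - \<pi> s t = 0 \<and>
        args dW - Pm s t = 0 \<and>
        args dg - \<mu> s t = 0 \<and>
        args dG - M s t = 0 \<and>
        pt \<pi> s t + cross3 (w s t) (\<pi> s t) + ps Pm s t + cross3 (W s t) (Pm s t)
          + cross3 (g s t) (\<mu> s t) + cross3 (G s t) (M s t) + cross3 (\<rho> s t) (R s t) = 0 \<and>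
        pt \<mu> s t + cross3 (w s t) (\<mu> s t) + ps M s t + cross3 (W s t) (M s t) - R s t = 0 \<and>
        matrix_inv (\<Lambda> s t) ** pt \<Lambda> s t = hat (w s t) \<and>
        matrix_inv (\<Lambda> s t) ** ps \<Lambda> s t = hat (W s t) \<and>
        matrix_inv (\<Lambda> s t) *v x s t = \<rho> s t \<and>
        matrix_inv (\<Lambda> s t) *v pt x s t = g s t \<and>
        matrix_inv (\<Lambda> s t) *v ps x s t = G s t"
      unfolding Let_def minv
      using z6[rule_format, OF st] z7[rule_format, OF st] z8[rule_format, OF st] z9[rule_format, OF st]
        z10[rule_format, OF st] e1 e2 c
      by (simp add: ar_def)
  qed
qed

lemma bwd:
  assumes eqs: CONCL
  shows "stationary L T0 T1 l \<Lambda> x w g W G \<rho> \<pi> Pm R \<mu> M"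
proof -
  have E: "ar dr s t - R s t = 0 \<and> ar dw s t - \<pi> s t = 0 \<and> ar dW s t - Pm s t = 0 \<and> ar dg s t - \<mu> s t = 0
     \<and> ar dG s t - M s t = 0 \<and>
        pt \<pi> s t + cross3 (w s t) (\<pi> s t) + ps Pm s t + cross3 (W s t) (Pm s t)
          + cross3 (g s t) (\<mu> s t) + cross3 (G s t) (M s t) + cross3 (\<rho> s t) (R s t) = 0 \<and>
        pt \<mu> s t + cross3 (w s t) (\<mu> s t) + ps M s t + cross3 (W s t) (M s t) - R s t = 0 \<and>
        transpose (\<Lambda> s t) ** pt \<Lambda> s t = hat (w s t) \<and>
        transpose (\<Lambda> s t) ** ps \<Lambda> s t = hat (W s t) \<and>
        transpose (\<Lambda> s t) *v x s t = \<rho> s t \<and>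
        transpose (\<Lambda> s t) *v pt x s t = g s t \<and>
        transpose (\<Lambda> s t) *v ps x s t = G s t"
    if st: "s \<in> {0..L}" "t \<in> {T0..T1}" for s t
    using eqs st unfolding Let_def minv ar_def by blast
  have cons: "transpose (\<Lambda> s t) ** pt \<Lambda> s t = hat (w s t)
       \<and> transpose (\<Lambda> s t) ** ps \<Lambda> s t = hat (W s t) \<and> transpose (\<Lambda> s t) *v x s t = \<rho> s t
       \<and> transpose (\<Lambda> s t) *v pt x s t = g s t \<and> transpose (\<Lambda> s t) *v ps x s t = G s t"
    if st: "s \<in> {0..L}" "t \<in> {T0..T1}" for s t
    using E[OF st] by blast
  have KL0: "KL s t = 0" if st: "s \<in> {0..L}" "t \<in> {T0..T1}" for s t
    using E[OF st] unfolding KL_def by simp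
  have Kx0: "Kx s t = 0" if st: "s \<in> {0..L}" "t \<in> {T0..T1}" for s t
  proof -
    have "R s t - pt \<mu> s t - cross3 (w s t) (\<mu> s t) - ps M s t - cross3 (W s t) (M s t)
       = - (pt \<mu> s t + cross3 (w s t) (\<mu> s t) + ps M s t + cross3 (W s t) (M s t) - R s t)"
      by (simp add: algebra_simps)
    also have "\<dots> = 0" using E[OF st] by simp
    finally show ?thesis using Kx_eq[of s t] E[OF st] by simp
  qed
  have dz: "(f has_real_derivative 0) (at 0)" if "(f has_real_derivative D) (at 0)" "D = 0" for f D
    using that by simp
  show ?thesis
    unfolding stationary_def Let_def
  proof (intro allI impI conjI)
    fix \<eta> :: "vec3 field" assume eta: "test_field L T0 T1 \<eta>"
    show "((\<lambda>e. action L T0 T1 l (\<lambda>s t. \<Lambda> s t ** so3_exp (e *\<^sub>R \<eta> s t)) x w g W G \<rho> \<pi> Pm R \<mu> M) has_real_derivative 0) (at 0)"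
    proof -
      have "dint L T0 T1 (\<lambda>s t. KL s t \<bullet> \<eta> s t) = 0" by (rule dint_zero) (simp add: KL0)
      moreover have "\<And>s t. s \<in> {0..L} \<Longrightarrow> t \<in> {T0..T1} \<Longrightarrow> transpose (\<Lambda> s t) ** pt \<Lambda> s t = hat (w s t)
       \<and> transpose (\<Lambda> s t) ** ps \<Lambda> s t = hat (W s t) \<and> transpose (\<Lambda> s t) *v x s t = \<rho> s t
       \<and> transpose (\<Lambda> s t) *v pt x s t = g s t \<and> transpose (\<Lambda> s t) *v ps x s t = G s t" by (rule cons)
      note v = var_Lam2[OF eta this]
      ultimately show ?thesis by simp
    qed
    show "((\<lambda>e. action L T0 T1 l \<Lambda> (\<lambda>s t. x s t + e *\<^sub>R \<eta> s t) w g W G \<rho> \<pi> Pm R \<mu> M) has_real_derivative 0) (at 0)"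
      by (rule dz[OF var_x2[OF eta]]) (rule dint_zero, simp add: Kx0)
    show "((\<lambda>e. action L T0 T1 l \<Lambda> x (\<lambda>s t. w s t + e *\<^sub>R \<eta> s t) g W G \<rho> \<pi> Pm R \<mu> M) has_real_derivative 0) (at 0)"
      by (rule dz[OF var_w[OF eta]]) (rule dint_zero, use E in simp)
    show "((\<lambda>e. action L T0 T1 l \<Lambda> x w (\<lambda>s t. g s t + e *\<^sub>R \<eta> s t) W G \<rho> \<pi> Pm R \<mu> M) has_real_derivative 0) (at 0)"
      by (rule dz[OF var_g[OF eta]]) (rule dint_zero, use E in simp)
    show "((\<lambda>e. action L T0 T1 l \<Lambda> x w g (\<lambda>s t. W s t + e *\<^sub>R \<eta> s t) G \<rho> \<pi> Pm R \<mu> M) has_real_derivative 0) (at 0)"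
      by (rule dz[OF var_W[OF eta]]) (rule dint_zero, use E in simp)
    show "((\<lambda>e. action L T0 T1 l \<Lambda> x w g W (\<lambda>s t. G s t + e *\<^sub>R \<eta> s t) \<rho> \<pi> Pm R \<mu> M) has_real_derivative 0) (at 0)"
      by (rule dz[OF var_G[OF eta]]) (rule dint_zero, use E in simp)
    show "((\<lambda>e. action L T0 T1 l \<Lambda> x w g W G (\<lambda>s t. \<rho> s t + e *\<^sub>R \<eta> s t) \<pi> Pm R \<mu> M) has_real_derivative 0) (at 0)"
      by (rule dz[OF var_rho[OF eta]]) (rule dint_zero, use E in simp)
    show "((\<lambda>e. action L T0 T1 l \<Lambda> x w g W G \<rho> (\<lambda>s t. \<pi> s t + e *\<^sub>R \<eta> s t) Pm R \<mu> M) has_real_derivative 0) (at 0)"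
      by (rule dz[OF var_pi[OF eta]]) (rule dint_zero, use E in simp)
    show "((\<lambda>e. action L T0 T1 l \<Lambda> x w g W G \<rho> \<pi> (\<lambda>s t. Pm s t + e *\<^sub>R \<eta> s t) R \<mu> M) has_real_derivative 0) (at 0)"
      by (rule dz[OF var_Pm[OF eta]]) (rule dint_zero, use E in simp)
    show "((\<lambda>e. action L T0 T1 l \<Lambda> x w g W G \<rho> \<pi> Pm (\<lambda>s t. R s t + e *\<^sub>R \<eta> s t) \<mu> M) has_real_derivative 0) (at 0)"
      by (rule dz[OF var_R[OF eta]]) (rule dint_zero, use E in simp)
    show "((\<lambda>e. action L T0 T1 l \<Lambda> x w g W G \<rho> \<pi> Pm R (\<lambda>s t. \<mu> s t + e *\<^sub>R \<eta> s t) M) has_real_derivative 0) (at 0)"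
      by (rule dz[OF var_mu[OF eta]]) (rule dint_zero, use E in simp)
    show "((\<lambda>e. action L T0 T1 l \<Lambda> x w g W G \<rho> \<pi> Pm R \<mu> (\<lambda>s t. M s t + e *\<^sub>R \<eta> s t)) has_real_derivative 0) (at 0)"
      by (rule dz[OF var_M[OF eta]]) (rule dint_zero, use E in simp)
  qed
qed

end


theorem mainTheorem2:
  fixes L T0 T1 :: real
    and l :: lagr and dw dg dW dG dr :: lagr_deriv
    and \<Lambda> :: "mat3 field"
    and x w g W G \<rho> \<pi> Pm R \<mu> M :: "vec3 field"
  assumes "0 < L" and "T0 < T1"
    and "\<forall>s t. rotation_matrix (\<Lambda> s t)"
    and "C1_field \<Lambda>" and "C1_field x"
    and "cont_field w" and "cont_field g" and "cont_field W" and "cont_field G" and "cont_field \<rho>"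
    and "C1_field \<pi>" and "C1_field Pm" and "cont_field R" and "C1_field \<mu>" and "C1_field M"
    and "functional_derivs L l dw dg dW dG dr"
    and "diff_under_int L T0 T1 l dw dg dW dG dr w g W G \<rho>"
    and "\<forall>d \<in> {dw, dg, dW, dG, dr}. continuous_on (cbox (0, T0) (L, T1))
           (\<lambda>(s,t). d (\<lambda>s. w s t) (\<lambda>s. g s t) (\<lambda>s. W s t) (\<lambda>s. G s t) (\<lambda>s. \<rho> s t) s)"
  shows "stationary L T0 T1 l \<Lambda> x w g W G \<rho> \<pi> Pm R \<mu> M \<longleftrightarrow>
    (\<forall>s \<in> {0..L}. \<forall>t \<in> {T0..T1}.
      (let args = (\<lambda>d. d (\<lambda>s. w s t) (\<lambda>s. g s t) (\<lambda>s. W s t) (\<lambda>s. G s t) (\<lambda>s. \<rho> s t) s) in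
        args dr - R s t = 0 \<and>
        args dw - \<pi> s t = 0 \<and>
        args dW - Pm s t = 0 \<and>
        args dg - \<mu> s t = 0 \<and>
        args dG - M s t = 0 \<and>
        pt \<pi> s t + cross3 (w s t) (\<pi> s t) + ps Pm s t + cross3 (W s t) (Pm s t)
          + cross3 (g s t) (\<mu> s t) + cross3 (G s t) (M s t) + cross3 (\<rho> s t) (R s t) = 0 \<and>
        pt \<mu> s t + cross3 (w s t) (\<mu> s t) + ps M s t + cross3 (W s t) (M s t) - R s t = 0 \<and>
        matrix_inv (\<Lambda> s t) ** pt \<Lambda> s t = hat (w s t) \<and>
        matrix_inv (\<Lambda> s t) ** ps \<Lambda> s t = hat (W s t) \<and>
        matrix_inv (\<Lambda> s t) *v x s t = \<rho> s t \<and>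
        matrix_inv (\<Lambda> s t) *v pt x s t = g s t \<and>
        matrix_inv (\<Lambda> s t) *v ps x s t = G s t))"
  proof -
  show ?thesis
    using fwd[OF assms(1-15) assms(17) assms(18)] bwd[OF assms(1-15) assms(17) assms(18)] by blast
qed

end
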